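(* There exists a binary linear $[690,659,3]_2 4$ code (length $690$, codimension $31$, minimum distance $3$, covering radius $4$). Consequently $\ell_2(31,4)\le690$.
   Context: $[n,n-r,d]_2R$: binary linear code of length $n$, codimension $r$, minimum distance $d$, covering radius $R$ (smallest $R$ such that every vector of $\mathbb{F}_2^r$ is a sum of at most $R$ columns of a parity-check matrix). $\ell_2(r,R)$ is the smallest length of a binary linear code of codimension $r$ and covering radius $R$. *)

theory Defs
  imports Main "HOL-Library.Z2"
begin

text \<open>Vectors of F_2^n are modelled as functions nat => bit vanishing outside {0..<n}.
 A parity-check matrix with r rows and n columns is H :: nat => nat => bit,
 entry H i j in row i (i < r), column j (j < n); only those entries are used.\<close>

definition vecs :: "nat \<Rightarrow> (nat \<Rightarrow> bit) set" where
  "vecs n = {x. \<forall>j\<ge>n. x j = 0}"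

definition lin_code :: "nat \<Rightarrow> nat \<Rightarrow> (nat \<Rightarrow> nat \<Rightarrow> bit) \<Rightarrow> (nat \<Rightarrow> bit) set" where
  "lin_code r n H = {x \<in> vecs n. \<forall>i<r. (\<Sum>j<n. H i j * x j) = 0}"

definition hamming :: "nat \<Rightarrow> (nat \<Rightarrow> bit) \<Rightarrow> (nat \<Rightarrow> bit) \<Rightarrow> nat" where
  "hamming n x y = card {j. j < n \<and> x j \<noteq> y j}"

definition min_dist :: "nat \<Rightarrow> (nat \<Rightarrow> bit) set \<Rightarrow> nat" where
  "min_dist n C = Min {hamming n x y | x y. x \<in> C \<and> y \<in> C \<and> x \<noteq> y}"

definition col_sum :: "nat \<Rightarrow> (nat \<Rightarrow> nat \<Rightarrow> bit) \<Rightarrow> nat set \<Rightarrow> (nat \<Rightarrow> bit)" where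
  "col_sum r H S = (\<lambda>i. if i < r then (\<Sum>j\<in>S. H i j) else 0)"

definition covers :: "nat \<Rightarrow> nat \<Rightarrow> (nat \<Rightarrow> nat \<Rightarrow> bit) \<Rightarrow> nat \<Rightarrow> bool" where
  "covers r n H R \<longleftrightarrow> (\<forall>s\<in>vecs r. \<exists>S\<subseteq>{..<n}. card S \<le> R \<and> s = col_sum r H S)"

definition cov_radius :: "nat \<Rightarrow> nat \<Rightarrow> (nat \<Rightarrow> nat \<Rightarrow> bit) \<Rightarrow> nat" where
  "cov_radius r n H = (LEAST R. covers r n H R)"

definition codim_code :: "nat \<Rightarrow> nat \<Rightarrow> (nat \<Rightarrow> nat \<Rightarrow> bit) \<Rightarrow> bool" where
  "codim_code n r H \<longleftrightarrow> r \<le> n \<and> card (lin_code r n H) = 2 ^ (n - r)"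

text \<open>[n, n-r, d]_2 R code given by parity-check matrix H.\<close>
definition is_code :: "nat \<Rightarrow> nat \<Rightarrow> nat \<Rightarrow> nat \<Rightarrow> (nat \<Rightarrow> nat \<Rightarrow> bit) \<Rightarrow> bool" where
  "is_code n r d R H \<longleftrightarrow> codim_code n r H \<and> min_dist n (lin_code r n H) = d
      \<and> cov_radius r n H = R"

definition ell2 :: "nat \<Rightarrow> nat \<Rightarrow> nat" where
  "ell2 r R = (LEAST n. \<exists>H. codim_code n r H \<and> cov_radius r n H = R)"

end

theory Submission
  imports Defs "HOL-Computational_Algebra.Polynomial"
begin

definition P :: "bit poly" where "P = [:1,0,1,0,0,1:]"
definition pn :: "nat \<Rightarrow> bit poly" where
  "pn n = [:of_bool (bit n 0), of_bool (bit n 1), of_bool (bit n 2), of_bool (bit n 3), of_bool (bit n 4):]"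

lemma P_nz: "P \<noteq> 0" by (simp add: P_def)
lemma degree_P: "degree P = 5" by (simp add: P_def)

lemma coeff_pn: "coeff (pn n) b = (if b < 5 then of_bool (bit n b) else 0)"
proof -
  have "b = 0 \<or> b = 1 \<or> b = 2 \<or> b = 3 \<or> b = 4 \<or> b \<ge> 5" by linarith
  then show ?thesis
    by (auto simp: pn_def coeff_pCons numeral_eq_Suc split: nat.splits)
qed

lemma degree_pn: "degree (pn n) < 5"
proof -
  have "degree (pn n) \<le> 4"
    by (rule degree_le) (auto simp: coeff_pn)
  then show ?thesis by simp
qed

lemma bit_add_of_bool: "(of_bool x :: bit) + of_bool y = of_bool (x \<noteq> y)"
  by (cases x; cases y) simp_all

lemma pn_add: "pn a + pn b = pn (xor a b)"
  by (rule poly_eqI) (simp add: coeff_pn bit_add_of_bool bit_xor_iff)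

lemma pn_0: "pn 0 = 0"
  by (simp add: pn_def)

lemma bits_below: "(n::nat) < 2 ^ k \<Longrightarrow> bit n i \<Longrightarrow> i < k"
  by (metis bit_take_bit_iff take_bit_nat_eq_self_iff)

lemma nat_eq_by_bits: "(a::nat) < 2 ^ k \<Longrightarrow> b < 2 ^ k \<Longrightarrow> (\<And>i. i < k \<Longrightarrow> bit a i = bit b i) \<Longrightarrow> a = b"
  by (rule bit_eqI) (metis bits_below)

lemma pn_inj: "a < 32 \<Longrightarrow> b < 32 \<Longrightarrow> pn a = pn b \<Longrightarrow> a = b"
proof -
  assume a: "a < 32" "b < 32" "pn a = pn b"
  have "\<And>i. i < 5 \<Longrightarrow> bit a i = bit b i"
  proof -
    fix i :: nat assume "i < 5"
    have "coeff (pn a) i = coeff (pn b) i" using a by simp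
    then show "bit a i = bit b i" using \<open>i < 5\<close> by (simp add: coeff_pn of_bool_eq_iff)
  qed
  then show "a = b" using a by (intro nat_eq_by_bits[of a 5 b]) simp_all
qed

lemma bit_cases': "(x::bit) = 0 \<or> x = 1" by (cases x) simp_all

lemma of_bool_eq_1: "of_bool ((x::bit) = 1) = x"
  using bit_cases'[of x] by auto

lemma D_repr: "degree (p::bit poly) < 5 \<Longrightarrow> \<exists>n<32. pn n = p"
proof -
  assume d: "degree p < 5"
  define n :: nat where "n = horner_sum of_bool 2 (map (\<lambda>i. coeff p i = 1) [0..<5])"
  have "n < 2 ^ 5" unfolding n_def
    by (metis horner_sum_of_bool_2_less length_map length_upt minus_nat.diff_0)
  moreover have "pn n = p"
  proof (rule poly_eqI)
    fix b :: nat
    show "coeff (pn n) b = coeff p b"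
    proof (cases "b < 5")
      case True
      then show ?thesis
        by (simp add: coeff_pn n_def bit_horner_sum_bit_iff of_bool_eq_1)
    next
      case False
      then show ?thesis using d by (simp add: coeff_pn coeff_eq_0)
    qed
  qed
  ultimately show ?thesis by auto
qed

definition D :: "bit poly set" where "D = {p. degree p < 5}"

lemma D_eq: "D = pn ` {..<32}"
proof
  show "pn ` {..<32} \<subseteq> D" using degree_pn by (auto simp: D_def)
  show "D \<subseteq> pn ` {..<32}"
    using D_repr by (force simp: D_def)
qed

lemma finite_D: "finite D" by (simp add: D_eq)

lemma mod_in_D: "x mod P \<in> D"
  using degree_mod_less[OF P_nz, of x] by (auto simp: D_def degree_P)

lemma inv_facts:
  "pn 1 * pn 1 = 1 + P * [:0:]"
  "pn 2 * pn 18 = 1 + P * [:1:]"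
  "pn 3 * pn 28 = 1 + P * [:1:]"
  "pn 4 * pn 9 = 1 + P * [:1:]"
  "pn 5 * pn 23 = 1 + P * [:0,1:]"
  "pn 6 * pn 14 = 1 + P * [:1:]"
  "pn 7 * pn 12 = 1 + P * [:1:]"
  "pn 8 * pn 22 = 1 + P * [:1,0,1:]"
  "pn 9 * pn 4 = 1 + P * [:1:]"
  "pn 10 * pn 25 = 1 + P * [:1,1,1:]"
  "pn 11 * pn 16 = 1 + P * [:1,0,1:]"
  "pn 12 * pn 7 = 1 + P * [:1:]"
  "pn 13 * pn 15 = 1 + P * [:0,1:]"
  "pn 14 * pn 6 = 1 + P * [:1:]"
  "pn 15 * pn 13 = 1 + P * [:0,1:]"
  "pn 16 * pn 11 = 1 + P * [:1,0,1:]"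
  "pn 17 * pn 24 = 1 + P * [:1,0,1,1:]"
  "pn 18 * pn 2 = 1 + P * [:1:]"
  "pn 19 * pn 29 = 1 + P * [:0,1,1,1:]"
  "pn 20 * pn 30 = 1 + P * [:1,0,1,1:]"
  "pn 21 * pn 26 = 1 + P * [:1,1,1,1:]"
  "pn 22 * pn 8 = 1 + P * [:1,0,1:]"
  "pn 23 * pn 5 = 1 + P * [:0,1:]"
  "pn 24 * pn 17 = 1 + P * [:1,0,1,1:]"
  "pn 25 * pn 10 = 1 + P * [:1,1,1:]"
  "pn 26 * pn 21 = 1 + P * [:1,1,1,1:]"
  "pn 27 * pn 31 = 1 + P * [:0,0,0,1:]"
  "pn 28 * pn 3 = 1 + P * [:1:]"
  "pn 29 * pn 19 = 1 + P * [:0,1,1,1:]"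
  "pn 30 * pn 20 = 1 + P * [:1,0,1,1:]"
  "pn 31 * pn 27 = 1 + P * [:0,0,0,1:]"

  by (simp_all add: pn_def P_def bit_0 one_pCons)

lemma upt32: "[0..<32] = [0,1,2,3,4,5,6,7,8,9,10,11,12,13,14,15,16,17,18,19,20,21,22,23,24,25,26,27,28,29,30,31::nat]"
  by (simp add: upt_rec)

lemma inv_all: assumes "n < 32" "n \<noteq> 0" shows "\<exists>m q. pn n * pn m = 1 + P * q"
proof -
  have "n \<in> set [0..<32]" using assms by simp
  then have "n \<in> {1,2,3,4,5,6,7,8,9,10,11,12,13,14,15,16,17,18,19,20,21,22,23,24,25,26,27,28,29,30,31}"
    using assms(2) unfolding upt32 by simp
  then show ?thesis
    apply (elim insertE)
    apply (use inv_facts in blast)+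
    done
qed

lemma cancel: assumes "a \<in> D" "a \<noteq> 0" "P dvd a * c" shows "P dvd c"
proof -
  obtain n where n: "n < 32" "pn n = a" using assms(1) by (auto simp: D_eq)
  have "n \<noteq> 0"
  proof
    assume "n = 0"
    then have "a = 0" using n pn_0 by simp
    with assms(2) show False ..
  qed
  then obtain m q where mq: "a * pn m = 1 + P * q" using inv_all n by blast
  have "c = pn m * (a * c) - P * (q * c)"
  proof -
    have "pn m * (a * c) = c * (a * pn m)" by (simp add: ac_simps)
    also have "\<dots> = c + P * (q * c)" by (simp add: mq algebra_simps)
    finally show ?thesis by simp
  qed
  moreover have "P dvd pn m * (a * c) - P * (q * c)"
    using assms(3) by (intro dvd_diff) simp_all
  ultimately show ?thesis by simp
qed

lemma D_dvd0: assumes "a \<in> D" "P dvd a" shows "a = 0"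
proof (rule ccontr)
  assume "a \<noteq> 0"
  then have "degree P \<le> degree a" using assms(2) dvd_imp_degree_le by blast
  then show False using assms(1) by (simp add: D_def degree_P)
qed

lemma D_diff: "a \<in> D \<Longrightarrow> b \<in> D \<Longrightarrow> a - b \<in> D"
  unfolding D_def using degree_diff_le by (metis max.bounded_iff mem_Collect_eq order.strict_iff_not le_less_trans not_le)

lemma key1:
  assumes D: "x1 \<in> D" "x2 \<in> D" "x3 \<in> D" "x4 \<in> D" "w1 \<in> D"
    and ne: "x1 \<noteq> x2" "x1 \<noteq> x3" "x1 \<noteq> x4"
    and e0: "P dvd (w1 + w2 + w3 + w4)"
    and e1: "P dvd (x1*w1 + x2*w2 + x3*w3 + x4*w4)"
    and e2: "P dvd (x1^2*w1 + x2^2*w2 + x3^2*w3 + x4^2*w4)"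
    and e3: "P dvd (x1^3*w1 + x2^3*w2 + x3^3*w3 + x4^3*w4)"
  shows "w1 = 0"
proof -
  have id: "(x1 - x2) * ((x1 - x3) * ((x1 - x4) * w1)) =
     (x1^3*w1 + x2^3*w2 + x3^3*w3 + x4^3*w4) - (x2+x3+x4) * (x1^2*w1 + x2^2*w2 + x3^2*w3 + x4^2*w4)
     + (x2*x3+x2*x4+x3*x4) * (x1*w1 + x2*w2 + x3*w3 + x4*w4) - x2*x3*x4 * (w1 + w2 + w3 + w4)"
    by algebra
  have "P dvd (x1 - x2) * ((x1 - x3) * ((x1 - x4) * w1))"
    unfolding id by (rule dvd_diff[OF dvd_add[OF dvd_diff[OF e3 dvd_mult[OF e2]] dvd_mult[OF e1]] dvd_mult[OF e0]])
  then have "P dvd (x1 - x3) * ((x1 - x4) * w1)"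
    by (rule cancel[rotated 2]) (use D ne D_diff in auto)
  then have "P dvd (x1 - x4) * w1"
    by (rule cancel[rotated 2]) (use D ne D_diff in auto)
  then have "P dvd w1"
    by (rule cancel[rotated 2]) (use D ne D_diff in auto)
  then show ?thesis using D_dvd0 D by blast
qed


definition FF :: "bit poly \<Rightarrow> bit poly \<Rightarrow> bit poly \<Rightarrow> bit poly \<Rightarrow>
   bit poly \<times> bit poly \<times> bit poly \<times> bit poly \<Rightarrow> bit poly \<times> bit poly \<times> bit poly \<times> bit poly" where
  "FF x1 x2 x3 x4 = (\<lambda>(w1,w2,w3,w4). ((w1 + w2 + w3 + w4) mod P,
      (x1*w1 + x2*w2 + x3*w3 + x4*w4) mod P,
      (x1^2*w1 + x2^2*w2 + x3^2*w3 + x4^2*w4) mod P,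
      (x1^3*w1 + x2^3*w2 + x3^3*w3 + x4^3*w4) mod P))"

lemma FF_inj:
  assumes D: "x1 \<in> D" "x2 \<in> D" "x3 \<in> D" "x4 \<in> D"
    and ne: "x1 \<noteq> x2" "x1 \<noteq> x3" "x1 \<noteq> x4" "x2 \<noteq> x3" "x2 \<noteq> x4" "x3 \<noteq> x4"
  shows "inj_on (FF x1 x2 x3 x4) (D \<times> D \<times> D \<times> D)"
proof (rule inj_onI)
  fix u v assume u: "u \<in> D \<times> D \<times> D \<times> D" and v: "v \<in> D \<times> D \<times> D \<times> D"
    and eq: "FF x1 x2 x3 x4 u = FF x1 x2 x3 x4 v"
  obtain u1 u2 u3 u4 where uu: "u = (u1,u2,u3,u4)" by (cases u) auto
  obtain v1 v2 v3 v4 where vv: "v = (v1,v2,v3,v4)" by (cases v) auto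
  define w1 where "w1 = u1 - v1"
  define w2 where "w2 = u2 - v2"
  define w3 where "w3 = u3 - v3"
  define w4 where "w4 = u4 - v4"
  have wD: "w1 \<in> D" "w2 \<in> D" "w3 \<in> D" "w4 \<in> D"
    using u v D_diff by (auto simp: uu vv w1_def w2_def w3_def w4_def)
  have m: "(a::bit poly) mod P = b mod P \<Longrightarrow> P dvd a - b" for a b
    by (simp add: mod_eq_dvd_iff)
  have e0: "P dvd (w1 + w2 + w3 + w4)"
    using m[of "u1 + u2 + u3 + u4" "v1 + v2 + v3 + v4"] eq
    by (simp add: FF_def uu vv w1_def w2_def w3_def w4_def algebra_simps)
  have e1: "P dvd (x1*w1 + x2*w2 + x3*w3 + x4*w4)"
    using m[of "x1*u1 + x2*u2 + x3*u3 + x4*u4" "x1*v1 + x2*v2 + x3*v3 + x4*v4"] eq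
    by (simp add: FF_def uu vv w1_def w2_def w3_def w4_def algebra_simps)
  have e2: "P dvd (x1^2*w1 + x2^2*w2 + x3^2*w3 + x4^2*w4)"
    using m[of "x1^2*u1 + x2^2*u2 + x3^2*u3 + x4^2*u4" "x1^2*v1 + x2^2*v2 + x3^2*v3 + x4^2*v4"] eq
    by (simp add: FF_def uu vv w1_def w2_def w3_def w4_def algebra_simps)
  have e3: "P dvd (x1^3*w1 + x2^3*w2 + x3^3*w3 + x4^3*w4)"
    using m[of "x1^3*u1 + x2^3*u2 + x3^3*u3 + x4^3*u4" "x1^3*v1 + x2^3*v2 + x3^3*v3 + x4^3*v4"] eq
    by (simp add: FF_def uu vv w1_def w2_def w3_def w4_def algebra_simps)
  have "w1 = 0"
    by (rule key1[OF D wD(1) ne(1,2,3) e0 e1 e2 e3])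
  moreover have "w2 = 0"
    using key1[OF D(2,1,3,4) wD(2) ne(1)[symmetric] ne(4,5), of w1 w3 w4] e0 e1 e2 e3
    by (simp add: ac_simps)
  moreover have "w3 = 0"
    using key1[OF D(3,1,2,4) wD(3) ne(2)[symmetric] ne(4)[symmetric] ne(6), of w1 w2 w4] e0 e1 e2 e3
    by (simp add: ac_simps)
  moreover have "w4 = 0"
    using key1[OF D(4,1,2,3) wD(4) ne(3)[symmetric] ne(5)[symmetric] ne(6)[symmetric], of w1 w2 w3] e0 e1 e2 e3
    by (simp add: ac_simps)
  ultimately show "u = v" by (simp add: uu vv w1_def w2_def w3_def w4_def)
qed

lemma solve:
  assumes D: "x1 \<in> D" "x2 \<in> D" "x3 \<in> D" "x4 \<in> D"
    and ne: "x1 \<noteq> x2" "x1 \<noteq> x3" "x1 \<noteq> x4" "x2 \<noteq> x3" "x2 \<noteq> x4" "x3 \<noteq> x4"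
    and t: "t0 \<in> D" "t1 \<in> D" "t2 \<in> D" "t3 \<in> D"
  shows "\<exists>b1 b2 b3 b4. b1 \<in> D \<and> b2 \<in> D \<and> b3 \<in> D \<and> b4 \<in> D \<and>
     (b1 + b2 + b3 + b4) mod P = t0 \<and>
     (x1*b1 + x2*b2 + x3*b3 + x4*b4) mod P = t1 \<and>
     (x1^2*b1 + x2^2*b2 + x3^2*b3 + x4^2*b4) mod P = t2 \<and>
     (x1^3*b1 + x2^3*b2 + x3^3*b3 + x4^3*b4) mod P = t3"
proof -
  let ?S = "D \<times> D \<times> D \<times> D"
  let ?F = "FF x1 x2 x3 x4"
  have fin: "finite ?S" using finite_D by simp
  have sub: "?F ` ?S \<subseteq> ?S" using mod_in_D by (auto simp: FF_def)
  have "card (?F ` ?S) = card ?S" by (rule card_image[OF FF_inj[OF D ne]])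
  then have "?F ` ?S = ?S" using card_subset_eq[OF fin sub] by simp
  then have "(t0,t1,t2,t3) \<in> ?F ` ?S" using t by simp
  then obtain b1 b2 b3 b4 where "(b1,b2,b3,b4) \<in> ?S" "?F (b1,b2,b3,b4) = (t0,t1,t2,t3)"
    by auto
  then show ?thesis by (auto simp: FF_def)
qed


definition hl :: "nat list" where "hl = [1776,551,1347,1543,1365,717,488,782,23,2042,1656,989,1635,917,1550,943,739,1901,1232,298,849,1239]"
definition hv :: "nat \<Rightarrow> nat" where "hv a = hl ! a"

datatype qt = L "nat \<times> nat \<times> nat \<times> nat" | N qt qt

definition okq :: "nat \<Rightarrow> nat \<times> nat \<times> nat \<times> nat \<Rightarrow> bool" where
  "okq s q = (case q of (a, b, c, d) \<Rightarrow> a < b \<and> b < c \<and> c < d \<and> d < 21 \<and>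
      xor (hv a) (xor (hv b) (xor (hv c) (hv d))) = s)"

fun chkT :: "nat \<Rightarrow> nat \<Rightarrow> qt \<Rightarrow> bool" where
  "chkT k base (L q) = (k = 0 \<and> okq base q)"
| "chkT k base (N l r) = (0 < k \<and> chkT (k - 1) base l \<and> chkT (k - 1) (base + 2 ^ (k - 1)) r)"

fun lookT :: "nat \<Rightarrow> qt \<Rightarrow> nat \<Rightarrow> nat \<times> nat \<times> nat \<times> nat" where
  "lookT k (L q) s = q"
| "lookT k (N l r) s = (if s < 2 ^ (k - 1) then lookT (k - 1) l s else lookT (k - 1) r (s - 2 ^ (k - 1)))"

lemma chkT_sound: "chkT k base T \<Longrightarrow> s < 2 ^ k \<Longrightarrow> okq (base + s) (lookT k T s)"
proof (induction T arbitrary: k base s)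
  case (L q)
  then show ?case by simp
next
  case (N l r)
  then obtain k' where k: "k = Suc k'" by (cases k) auto
  show ?case
  proof (cases "s < 2 ^ k'")
    case True
    then show ?thesis using N k by simp
  next
    case False
    have "s - 2 ^ k' < 2 ^ k'" using N(4) False k by simp
    then have "okq (base + 2 ^ k' + (s - 2 ^ k')) (lookT k' r (s - 2 ^ k'))"
      using N k by simp
    moreover have "base + 2 ^ k' + (s - 2 ^ k') = base + s" using False by simp
    ultimately show ?thesis using False k by simp
  qed
qed

lemma hv_vals:
  "hv 0 = 1776"
  "hv 1 = 551"
  "hv 2 = 1347"
  "hv 3 = 1543"
  "hv 4 = 1365"
  "hv 5 = 717"
  "hv 6 = 488"
  "hv 7 = 782"
  "hv 8 = 23"
  "hv 9 = 2042"
  "hv 10 = 1656"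
  "hv 11 = 989"
  "hv 12 = 1635"
  "hv 13 = 917"
  "hv 14 = 1550"
  "hv 15 = 943"
  "hv 16 = 739"
  "hv 17 = 1901"
  "hv 18 = 1232"
  "hv 19 = 298"
  "hv 20 = 849"
  "hv 21 = 1239"
  "hv (Suc 0) = 551"
  by (simp_all add: hv_def hl_def)

definition TT :: qt where
  "TT = N (N (N (N (N (N (N (N (N (N (N (L (0,14,15,20)) (L (0,5,17,20))) (N (L (2,3,8,20)) (L (8,11,16,19)))) (N (N (L (0,7,18,19)) (L (1,6,8,11))) (N (L (1,6,16,19)) (L (1,3,9,11))))) (N (N (N (L (0,7,12,13)) (L (0,3,15,20))) (N (L (1,9,10,15)) (L (0,2,8,15)))) (N (N (L (7,9,13,17)) (L (1,4,15,18))) (N (L (0,2,17,18)) (L (2,5,18,20)))))) (N (N (N (N (L (0,1,8,18)) (L (1,9,12,15))) (N (L (3,10,12,14)) (L (0,7,10,13)))) (N (N (L (0,1,5,14)) (L (0,1,15,17))) (N (L (3,11,12,15)) (L (1,7,11,16))))) (N (N (N (L (0,4,17,18)) (L (4,5,18,20))) (N (L (0,5,9,11)) (L (1,2,15,18)))) (N (N (L (1,3,17,20)) (L (0,1,3,5))) (N (L (1,2,8,17)) (L (0,9,10,17))))))) (N (N (N (N (N (L (1,4,10,19)) (L (1,2,13,18))) (N (L (2,7,8,10)) (L (0,1,7,9)))) (N (N (L (0,3,7,11)) (L (11,12,13,14))) (N (L (3,15,16,17)) (L (0,4,8,13))))) (N (N (N (L (1,5,6,19)) (L (0,7,10,15)))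 (N (L (4,9,15,19)) (L (1,9,12,13)))) (N (N (L (2,4,13,15)) (L (0,7,11,14))) (N (L (1,5,13,20)) (L (0,1,13,17)))))) (N (N (N (N (L (1,9,10,13)) (L (0,2,8,13))) (N (L (0,7,12,15)) (L (0,1,3,16)))) (N (N (L (0,9,11,16)) (L (0,3,6,19))) (N (L (1,2,10,19)) (L (0,8,9,19))))) (N (N (N (L (2,4,5,16)) (L (1,5,7,11))) (N (L (0,1,14,16)) (L (1,4,12,19)))) (N (N (L (0,6,14,19)) (L (4,6,12,16))) (N (L (3,5,7,9)) (L (8,13,17,18)))))))) (N (N (N (N (N (N (L (0,7,11,12)) (L (3,11,13,14))) (N (L (0,4,5,19)) (L (1,3,7,17)))) (N (N (L (7,9,11,17)) (L (3,10,13,15))) (N (L (0,9,15,16)) (L (8,12,16,18))))) (N (N (N (L (1,11,16,20)) (L (1,2,3,19))) (N (L (0,6,10,19)) (L (1,5,7,15)))) (N (N (L (0,1,10,16)) (L (1,6,8,13))) (N (L (2,9,11,19)) (L (1,3,9,13)))))) (N (N (N (N (L (2,5,7,18)) (L (0,6,12,19))) (N (L (0,5,9,13)) (L (1,9,16,17)))) (N (N (L (0,2,5,19)) (L (2,17,19,20))) (N (L (0,3,7,15)) (L (0,1,12,16))))) (N (N (N (L (4,9,11,19)) (L (3,4,6,16))) (N (L (5,7,9,12)) (L (0,7,10,11)))) (N (N (L (5,11,15,16)) (L (0,6,13,18))) (N (L (0,5,7,17)) (L (0,7,14,15))))))) (N (N (N (N (N (L (0,3,9,17)) (L (2,3,5,6)))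 (N (L (0,1,5,10)) (L (1,9,11,12)))) (N (N (L (2,4,11,15)) (L (0,7,13,14))) (N (L (1,5,11,20)) (L (0,1,11,17))))) (N (N (N (L (0,5,9,15)) (L (0,9,14,17))) (N (L (0,1,4,6)) (L (4,8,10,20)))) (N (N (L (0,3,7,13)) (L (0,12,15,20))) (N (L (2,3,9,18)) (L (0,4,8,11)))))) (N (N (N (N (L (0,7,16,17)) (L (1,5,7,13))) (N (L (0,11,14,20)) (L (5,11,14,17)))) (N (N (L (7,9,12,16)) (L (1,3,9,15))) (N (L (0,10,15,20)) (L (1,6,8,15))))) (N (N (N (L (1,9,10,11)) (L (0,1,5,12))) (N (L (0,2,16,19)) (L (0,3,11,20)))) (N (N (L (0,1,2,6)) (L (1,5,9,17))) (N (L (2,7,16,18)) (L (1,4,11,18))))))))) (N (N (N (N (N (N (N (L (0,4,5,6)) (L (0,3,10,14))) (N (L (0,1,9,15)) (L (1,8,12,18)))) (N (N (L (2,14,16,19)) (L (0,2,4,12))) (N (L (1,12,15,17)) (L (1,5,12,14))))) (N (N (N (L (10,14,15,20)) (L (1,2,8,9))) (N (L (6,11,13,19)) (L (1,2,3,6)))) (N (N (L (0,11,14,15)) (L (0,5,11,17))) (N (L (1,3,5,12)) (L (0,4,9,18)))))) (N (N (N (N (L (1,3,11,17)) (L (2,13,17,19))) (N (L (3,7,13,14)) (L (12,14,15,20)))) (N (N (L (1,4,6,14)) (L (1,3,5,10))) (N (L (0,2,5,6)) (L (2,6,17,20))))) (N (N (N (L (1,5,11,15)) (L (0,2,9,18)))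 (N (L (0,3,12,14)) (L (1,7,16,20)))) (N (N (L (1,5,10,14)) (L (1,3,4,6))) (N (L (0,2,4,10)) (L (0,13,18,19))))))) (N (N (N (N (N (L (0,8,17,19)) (L (0,7,14,20))) (N (L (1,5,11,13)) (L (0,11,16,17)))) (N (N (L (7,8,17,18)) (L (0,15,18,19))) (N (L (0,5,10,16)) (L (1,10,13,17))))) (N (N (N (L (0,1,4,19)) (L (0,12,13,15))) (N (L (0,2,7,8)) (L (1,7,9,10)))) (N (N (L (1,4,7,18)) (L (2,11,16,18))) (N (L (0,4,6,16)) (L (4,8,10,13)))))) (N (N (N (N (L (1,7,9,12)) (L (3,9,15,16))) (N (L (0,10,13,15)) (L (6,8,15,16)))) (N (N (L (0,1,7,17)) (L (1,5,7,20))) (N (L (0,11,13,14)) (L (2,4,7,15))))) (N (N (N (L (0,1,9,13)) (L (2,8,10,13))) (N (L (1,2,7,18)) (L (1,3,10,16)))) (N (N (L (0,4,7,8)) (L (0,5,12,16))) (N (L (0,1,2,19)) (L (0,3,11,13)))))))) (N (N (N (N (N (N (L (0,10,11,13)) (L (5,9,12,13))) (N (L (2,9,19,20)) (L (3,9,11,16)))) (N (N (L (0,13,14,15)) (L (0,5,13,17))) (N (L (0,6,7,18)) (L (1,8,11,19))))) (N (N (N (L (2,6,7,17)) (L (0,5,7,9))) (N (L (4,5,10,19)) (L (2,5,13,18)))) (N (N (L (0,7,12,20)) (L (0,3,13,15))) (N (L (6,12,13,18)) (L (2,8,13,14)))))) (N (N (N (N (L (0,5,14,16)) (L (0,15,16,17)))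 (N (L (1,2,4,16)) (L (10,18,19,20)))) (N (N (L (0,8,16,18)) (L (6,10,13,18))) (N (L (1,6,7,8)) (L (0,7,10,20))))) (N (N (N (L (1,3,13,17)) (L (0,3,5,16))) (N (L (2,8,16,17)) (L (0,11,12,13)))) (N (N (L (2,5,10,19)) (L (1,7,9,14))) (N (L (3,7,10,15)) (L (1,10,12,16))))))) (N (N (N (N (N (L (5,9,10,15)) (L (0,2,3,4))) (N (L (1,3,15,17)) (L (0,4,8,20)))) (N (N (L (3,7,10,13)) (L (0,10,12,14))) (N (L (4,14,17,18)) (L (0,7,9,16))))) (N (N (N (L (0,2,4,14)) (L (2,12,16,19))) (N (L (2,8,11,12)) (L (0,1,17,20)))) (N (N (L (0,3,10,12)) (L (3,5,9,11))) (N (L (1,8,14,18)) (L (1,2,6,12)))))) (N (N (N (N (L (0,1,9,11)) (L (1,5,10,12))) (N (L (2,10,16,19)) (L (1,4,18,20)))) (N (N (L (1,2,6,10)) (L (0,2,8,20))) (N (L (3,5,17,20)) (L (3,14,15,20))))) (N (N (N (L (6,13,15,19)) (L (1,4,6,12))) (N (L (0,5,8,18)) (L (5,9,12,15)))) (N (N (L (1,2,4,5)) (L (5,7,11,16))) (N (L (1,13,15,16)) (L (0,5,15,17)))))))))) (N (N (N (N (N (N (N (N (L (0,1,10,15)) (L (0,6,8,14))) (N (L (7,9,12,13)) (L (0,3,9,14)))) (N (N (L (0,1,11,14)) (L (0,5,6,18))) (N (L (0,7,13,17)) (L (1,5,7,16))))) (N (N (N (L (0,3,6,8)) (L (1,3,10,20)))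 (N (L (0,2,6,20)) (L (1,2,8,10)))) (N (N (L (0,2,13,19)) (L (0,1,3,11))) (N (L (2,6,10,11)) (L (0,5,12,20)))))) (N (N (N (N (L (1,2,8,12)) (L (0,9,10,12))) (N (L (1,3,12,20)) (L (0,7,14,16)))) (N (N (L (0,5,10,20)) (L (1,5,6,8))) (N (L (0,4,12,18)) (L (1,3,5,9))))) (N (N (N (L (1,3,6,18)) (L (3,5,11,14))) (N (L (0,3,7,16)) (L (0,1,12,15)))) (N (N (L (0,2,4,9)) (L (1,4,8,10))) (N (L (1,5,9,14)) (L (1,9,15,17))))))) (N (N (N (N (N (L (0,4,15,19)) (L (0,1,12,13))) (N (L (3,11,13,17)) (L (1,2,17,19)))) (N (N (L (0,5,9,16)) (L (1,9,13,17))) (N (L (4,6,13,14)) (L (3,5,10,13))))) (N (N (N (L (2,4,11,16)) (L (3,4,19,20))) (N (L (5,11,13,15)) (L (0,6,16,18)))) (N (N (L (6,7,8,11)) (L (0,1,18,19))) (N (L (3,7,9,11)) (L (3,4,6,13)))))) (N (N (N (N (L (0,9,13,15)) (L (8,12,13,18))) (N (L (1,7,10,12)) (L (3,10,15,16)))) (N (N (L (0,3,5,7)) (L (1,4,17,19))) (N (L (0,2,15,19)) (L (2,7,8,17))))) (N (N (N (L (1,6,11,19)) (L (0,7,8,18))) (N (L (0,1,10,13)) (L (1,6,8,16)))) (N (N (L (0,7,15,17)) (L (0,5,7,14))) (N (L (1,11,13,20)) (L (1,2,4,7)))))))) (N (N (N (N (N (N (L (2,7,11,18)) (L (1,4,16,18)))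 (N (L (0,9,11,13)) (L (0,4,6,7)))) (N (N (L (0,2,11,19)) (L (0,1,3,13))) (N (L (1,9,10,16)) (L (0,2,8,16))))) (N (N (N (L (4,5,9,19)) (L (8,16,17,18))) (N (L (1,6,15,19)) (L (0,5,7,10)))) (N (N (L (0,1,13,14)) (L (1,3,7,12))) (N (L (0,7,11,17)) (L (5,7,11,20)))))) (N (N (N (N (L (0,5,7,12)) (L (0,4,8,16))) (N (L (0,4,11,19)) (L (11,12,14,16)))) (N (N (L (5,7,9,17)) (L (0,2,6,7))) (N (L (1,3,7,10)) (L (1,2,16,18))))) (N (N (N (L (1,5,16,20)) (L (0,1,16,17))) (N (L (2,4,15,16)) (L (1,7,11,15)))) (N (N (L (3,7,9,15)) (L (1,9,12,16))) (N (L (2,5,9,19)) (L (0,6,17,19))))))) (N (N (N (N (N (L (1,2,4,20)) (L (1,7,11,13))) (N (L (0,5,14,20)) (L (0,15,17,20)))) (N (N (L (0,2,3,18)) (L (0,7,10,16))) (N (L (0,8,18,20)) (L (0,9,12,14))))) (N (N (N (L (1,5,9,10)) (L (0,1,11,12))) (N (L (4,6,10,15)) (L (0,3,5,20)))) (N (N (L (0,6,8,12)) (L (0,2,14,18))) (N (L (0,3,9,12)) (L (1,4,5,18)))))) (N (N (N (N (L (1,6,13,19)) (L (2,3,6,11))) (N (L (0,1,10,11)) (L (1,5,9,12)))) (N (N (L (1,2,3,8)) (L (0,3,9,10))) (N (L (0,1,14,15)) (L (0,1,5,17))))) (N (N (N (L (0,9,11,15)) (L (1,2,5,18))) (N (L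 (7,9,16,17)) (L (0,4,14,18)))) (N (N (L (0,9,10,14)) (L (1,2,8,14))) (N (L (0,7,12,16)) (L (0,1,3,15))))))))) (N (N (N (N (N (N (N (L (1,3,5,17)) (L (0,1,3,20))) (N (L (2,6,10,20)) (L (0,1,2,8)))) (N (N (L (2,10,13,19)) (L (1,3,10,11))) (N (L (0,2,6,11)) (L (5,9,11,17))))) (N (N (N (L (0,1,14,20)) (L (1,5,14,17))) (N (L (2,4,5,20)) (L (0,2,4,17)))) (N (N (L (1,10,11,14)) (L (1,8,17,18))) (N (L (6,15,16,19)) (L (2,4,9,12)))))) (N (N (N (N (L (0,4,6,11)) (L (0,7,9,13))) (N (L (3,7,10,16)) (L (1,10,12,15)))) (N (N (L (0,3,14,17)) (L (0,1,4,8))) (N (L (2,8,15,17)) (L (0,2,7,19))))) (N (N (N (L (0,5,10,11)) (L (2,6,12,20))) (N (L (2,3,14,18)) (L (3,6,8,12)))) (N (N (L (0,5,14,15)) (L (14,15,17,20))) (N (L (1,2,4,15)) (L (2,12,13,19))))))) (N (N (N (N (N (L (2,7,8,9)) (L (0,1,7,10))) (N (L (0,8,13,18)) (L (6,10,16,18)))) (N (N (L (1,2,4,13)) (L (1,7,11,20))) (N (L (0,5,13,14)) (L (0,13,15,17))))) (N (N (N (L (3,6,17,19)) (L (1,10,12,13))) (N (L (7,8,12,18)) (L (0,7,9,15)))) (N (N (L (2,8,13,17)) (L (0,11,12,16))) (N (L (0,8,12,19)) (L (0,3,5,13)))))) (N (N (N (N (L (2,3,8,16)) (L (5,7,11,15)))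 (N (L (0,14,15,16)) (L (0,5,16,17)))) (N (N (L (1,2,9,19)) (L (0,8,10,19))) (N (L (0,10,11,16)) (L (5,9,12,16))))) (N (N (N (L (6,12,16,18)) (L (2,8,14,16))) (N (L (0,1,7,12)) (L (0,3,15,16)))) (N (N (L (3,5,7,10)) (L (2,5,16,18))) (N (L (1,7,9,17)) (L (4,13,15,18)))))))) (N (N (N (N (N (N (L (0,11,14,16)) (L (2,3,15,19))) (N (L (0,7,17,20)) (L (0,8,14,19)))) (N (N (L (0,10,15,16)) (L (6,8,13,15))) (N (L (2,6,7,12)) (L (0,5,18,19))))) (N (N (N (L (0,2,19,20)) (L (0,3,11,16))) (N (L (0,3,8,19)) (L (0,5,12,13)))) (N (N (L (2,7,18,20)) (L (1,3,10,13))) (N (L (0,1,9,16)) (L (2,8,10,16)))))) (N (N (N (N (L (0,5,10,13)) (L (1,10,16,17))) (N (L (5,6,11,19)) (L (1,14,18,19)))) (N (N (L (1,5,11,16)) (L (0,11,13,17))) (N (L (1,3,12,13)) (L (0,1,7,14))))) (N (N (N (L (0,4,6,13)) (L (0,7,9,11))) (N (L (1,3,18,19)) (L (2,11,13,18)))) (N (N (L (3,6,16,18)) (L (2,6,7,10))) (N (L (0,1,3,7)) (L (0,12,15,16))))))) (N (N (N (N (N (L (0,1,5,9)) (L (1,2,6,17))) (N (L (0,3,10,17)) (L (3,5,10,20)))) (N (N (L (1,5,12,17)) (L (0,1,12,20))) (N (L (3,9,10,12)) (L (0,3,5,11))))) (N (N (N (L (4,12,14,18)) (L (0,16,18,19)))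 (N (L (0,5,10,15)) (L (0,10,14,17)))) (N (N (L (1,2,4,11)) (L (1,7,13,20))) (N (L (0,5,11,14)) (L (0,1,6,18)))))) (N (N (N (N (L (0,12,14,17)) (L (0,5,12,15))) (N (L (2,13,14,19)) (L (1,3,11,14)))) (N (N (L (0,2,6,15)) (L (5,9,15,17))) (N (L (3,6,8,14)) (L (1,3,10,15))))) (N (N (N (L (3,5,12,20)) (L (0,3,12,17))) (N (L (2,5,8,12)) (L (2,3,13,19)))) (N (N (L (6,11,16,19)) (L (2,3,6,20))) (N (L (0,1,10,20)) (L (1,5,10,17))))))))))) (N (N (N (N (N (N (N (N (N (L (0,3,11,19)) (L (0,1,2,13))) (N (L (3,6,10,13)) (L (0,3,8,16)))) (N (N (L (1,4,7,10)) (L (2,10,11,16))) (N (L (2,8,10,19)) (L (0,1,9,19))))) (N (N (N (L (2,3,15,16)) (L (0,11,14,19))) (N (L (0,8,14,16)) (L (4,8,12,19)))) (N (N (L (1,5,6,7)) (L (0,10,15,19))) (N (L (0,5,16,18)) (L (1,13,17,18)))))) (N (N (N (N (L (4,8,10,19)) (L (0,3,6,7))) (N (L (1,2,7,10)) (L (0,7,8,9)))) (N (N (L (2,13,15,17)) (L (2,5,13,14))) (N (L (0,12,15,19)) (L (0,1,4,13))))) (N (N (N (L (0,6,7,14)) (L (3,6,12,13))) (N (L (0,13,15,18)) (L (5,6,11,16)))) (N (N (L (2,3,5,13)) (L (1,5,11,19))) (N (L (1,5,8,16)) (L (0,8,13,17))))))) (N (N (N (N (N (L (14,15,18,20)) (L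 (5,17,18,20))) (N (L (1,6,7,16)) (L (2,4,6,11)))) (N (N (L (0,5,8,14)) (L (0,8,15,17))) (N (L (1,2,4,8)) (L (0,4,9,10))))) (N (N (N (L (7,12,13,18)) (L (0,3,14,18))) (N (L (0,2,9,12)) (L (1,8,10,12)))) (N (N (L (0,12,13,19)) (L (0,1,4,15))) (N (L (6,9,17,20)) (L (0,2,5,20)))))) (N (N (N (N (L (2,5,11,12)) (L (0,2,9,10))) (N (L (1,2,3,20)) (L (1,11,16,19)))) (N (N (L (1,5,14,18)) (L (1,15,17,18))) (N (L (0,2,4,18)) (L (0,10,13,19))))) (N (N (N (L (3,6,10,15)) (L (0,4,5,20))) (N (L (5,9,11,18)) (L (0,1,2,15)))) (N (N (L (0,4,9,12)) (L (1,3,5,18))) (N (L (8,9,11,14)) (L (7,10,12,19)))))))) (N (N (N (N (N (N (L (1,4,12,20)) (L (0,13,14,19))) (N (L (1,5,10,18)) (L (2,12,14,17)))) (N (N (L (0,3,12,18)) (L (1,4,5,9))) (N (L (1,8,10,14)) (L (0,2,9,14))))) (N (N (N (L (0,3,13,19)) (L (0,1,2,11))) (N (L (1,4,6,18)) (L (4,5,11,14)))) (N (N (L (0,2,6,8)) (L (0,12,14,18))) (N (L (0,2,3,9)) (L (1,3,8,10)))))) (N (N (N (N (L (7,16,17,18)) (L (0,4,9,14))) (N (L (0,1,6,17)) (L (1,2,5,9)))) (N (N (L (0,16,17,19)) (L (1,5,13,19))) (N (L (0,10,14,18)) (L (0,8,11,17))))) (N (N (N (L (0,3,4,9)) (L (1,5,12,18)))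 (N (L (0,4,6,8)) (L (1,4,10,20)))) (N (N (L (1,2,6,18)) (L (1,8,12,14))) (N (L (0,2,7,16)) (L (0,1,4,11))))))) (N (N (N (N (N (L (7,11,12,18)) (L (3,6,16,17))) (N (L (4,5,18,19)) (L (2,5,10,13)))) (N (N (L (0,11,12,19)) (L (4,11,14,16))) (N (L (0,4,5,7)) (L (0,8,12,16))))) (N (N (N (L (0,11,13,18)) (L (5,6,15,16))) (N (L (2,7,9,11)) (L (1,4,9,16)))) (N (N (L (1,10,16,18)) (L (1,2,3,7))) (N (L (0,6,7,10)) (L (1,5,15,19)))))) (N (N (N (N (L (0,2,5,7)) (L (2,7,17,20))) (N (L (0,3,15,19)) (L (2,11,14,16)))) (N (N (L (2,5,18,19)) (L (0,6,7,12))) (N (L (3,7,15,18)) (L (1,12,16,18))))) (N (N (N (L (1,8,11,13)) (L (2,3,8,19))) (N (L (0,5,17,19)) (L (0,14,15,19)))) (N (N (L (0,8,10,16)) (L (1,2,9,16))) (N (L (5,7,17,18)) (L (0,7,18,20))))))))) (N (N (N (N (N (N (N (L (7,8,9,12)) (L (0,7,15,18))) (N (L (3,6,7,12)) (L (0,6,13,14)))) (N (N (L (0,7,8,17)) (L (0,14,19,20))) (N (L (5,10,16,18)) (L (2,3,5,7))))) (N (N (N (L (0,8,9,13)) (L (1,2,10,13))) (N (L (0,3,6,13)) (L (3,8,10,16)))) (N (N (L (0,1,4,7)) (L (0,2,11,16))) (N (L (0,2,8,19)) (L (1,9,10,19)))))) (N (N (N (N (L (0,1,17,19)) (L (1,5,19,20)))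 (N (L (1,2,12,13)) (L (2,4,15,19)))) (N (N (L (1,7,17,18)) (L (4,9,13,15))) (N (L (0,6,16,17)) (L (1,5,6,13))))) (N (N (N (L (0,4,8,19)) (L (3,6,7,10))) (N (L (0,1,2,7)) (L (0,4,11,16)))) (N (N (L (4,7,8,18)) (L (5,12,16,18))) (N (L (1,2,18,19)) (L (1,4,10,13))))))) (N (N (N (N (N (L (2,7,14,16)) (L (1,4,11,14))) (N (L (1,9,15,18)) (L (0,1,8,12)))) (N (N (L (4,6,8,14)) (L (1,3,6,17))) (N (L (0,2,10,17)) (L (1,8,9,17))))) (N (N (N (L (1,2,12,15)) (L (2,3,7,16))) (N (L (4,5,12,20)) (L (0,4,12,17)))) (N (N (L (0,7,10,19)) (L (1,5,6,15))) (N (L (6,7,11,13)) (L (2,4,6,20)))))) (N (N (N (N (L (0,3,6,15)) (L (4,5,10,20))) (N (L (0,8,9,15)) (L (1,2,10,15)))) (N (N (L (4,9,10,12)) (L (0,4,5,11))) (N (L (2,5,6,18)) (L (0,7,12,19))))) (N (N (N (L (0,1,8,10)) (L (0,6,14,15))) (N (L (3,12,14,18)) (L (0,7,13,18)))) (N (N (L (1,8,11,20)) (L (0,2,12,17))) (N (L (1,2,3,11)) (L (1,16,19,20)))))))) (N (N (N (N (N (N (L (0,8,9,11)) (L (1,2,10,11))) (N (L (0,3,6,11)) (L (0,9,16,19)))) (N (N (L (1,2,5,17)) (L (0,1,2,20))) (N (L (0,4,14,17)) (L (0,1,3,8))))) (N (N (N (L (2,4,14,18)) (L (4,6,8,12)))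 (N (L (0,1,5,18)) (L (0,6,11,14)))) (N (N (L (1,2,3,15)) (L (2,7,12,16))) (N (L (0,1,8,14)) (L (0,3,4,17)))))) (N (N (N (N (L (0,2,14,17)) (L (0,2,5,15))) (N (L (1,4,5,17)) (L (0,1,4,20)))) (N (N (L (0,6,12,15)) (L (2,8,18,20))) (N (L (2,7,10,16)) (L (1,4,10,11))))) (N (N (N (L (2,3,5,20)) (L (0,2,3,17))) (N (L (0,7,14,19)) (L (0,8,17,20)))) (N (N (L (6,7,13,15)) (L (2,3,9,12))) (N (L (0,15,18,20)) (L (1,5,6,11))))))) (N (N (N (N (N (L (1,3,4,13)) (L (2,4,11,19))) (N (L (0,6,18,19)) (L (1,7,8,11)))) (N (N (L (0,1,16,18)) (L (5,13,17,18))) (N (L (2,7,9,20)) (L (4,9,11,13))))) (N (N (N (L (0,12,19,20)) (L (0,4,15,16))) (N (L (1,2,16,17)) (L (0,2,5,13)))) (N (N (L (2,6,17,19)) (L (0,5,9,19))) (N (L (0,6,12,13)) (L (3,6,7,14)))))) (N (N (N (N (L (1,3,9,19)) (L (1,6,11,16))) (N (L (1,6,8,19)) (L (0,7,11,18)))) (N (N (L (1,8,13,20)) (L (0,6,10,13))) (N (L (1,2,3,13)) (L (7,10,18,20))))) (N (N (N (L (2,5,7,10)) (L (1,9,14,19))) (N (L (3,10,15,19)) (L (11,12,13,18)))) (N (N (L (1,4,16,17)) (L (0,4,5,13))) (N (L (3,11,14,19)) (L (0,2,15,16)))))))))) (N (N (N (N (N (N (N (N (L (4,15,18,19)) (L (1,12,13,18)))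 (N (L (3,6,14,16)) (L (4,5,10,16)))) (N (N (L (0,4,7,15)) (L (2,11,13,14))) (N (L (4,11,16,17)) (L (1,2,7,17))))) (N (N (N (L (6,8,11,19)) (L (0,1,7,18))) (N (L (0,8,10,13)) (L (1,2,9,13)))) (N (N (L (2,3,11,13)) (L (3,4,7,20))) (N (L (1,8,11,16)) (L (2,4,7,8)))))) (N (N (N (N (L (0,3,5,19)) (L (0,8,12,13))) (N (L (0,2,7,15)) (L (2,8,17,19)))) (N (N (L (3,5,7,18)) (L (2,5,10,16))) (N (L (1,10,12,19)) (L (3,6,13,17))))) (N (N (N (L (0,15,17,19)) (L (0,5,14,19))) (N (L (1,10,13,18)) (L (1,2,4,19)))) (N (N (L (1,6,7,11)) (L (0,8,18,19))) (N (L (0,11,16,18)) (L (5,6,13,15))))))) (N (N (N (N (N (L (1,5,8,11)) (L (6,8,14,18))) (N (L (0,13,17,19)) (L (1,5,16,19)))) (N (N (L (0,2,9,17)) (L (1,8,10,17))) (N (L (7,13,17,18)) (L (1,4,9,15))))) (N (N (N (L (0,2,7,13)) (L (0,4,11,20))) (N (L (2,6,18,20)) (L (0,8,12,15)))) (N (N (L (2,13,18,19)) (L (1,3,11,18))) (N (L (0,7,9,19)) (L (5,12,18,20)))))) (N (N (N (N (L (0,5,11,18)) (L (0,1,6,14))) (N (L (0,4,9,17)) (L (2,4,5,6)))) (N (N (L (0,8,11,14)) (L (0,10,17,18))) (N (L (2,3,11,15)) (L (0,14,16,19))))) (N (N (N (L (0,1,3,6)) (L (3,8,10,20))) (N (L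 (0,1,8,9)) (L (1,12,15,18)))) (N (N (L (2,4,9,18)) (L (0,3,8,11))) (N (L (0,3,16,19)) (L (0,2,11,20)))))))) (N (N (N (N (N (N (L (4,10,12,14)) (L (0,10,16,19))) (N (L (0,5,15,18)) (L (0,14,17,18)))) (N (N (L (3,6,9,20)) (L (1,11,13,19))) (N (L (0,8,14,15)) (L (0,1,6,10))))) (N (N (N (L (5,6,12,14)) (L (1,11,12,18))) (N (L (0,3,17,18)) (L (3,5,18,20)))) (N (N (L (2,5,15,17)) (L (0,2,15,20))) (N (L (1,4,17,20)) (L (0,1,4,5)))))) (N (N (N (N (L (2,4,8,20)) (L (7,8,11,13))) (N (L (1,5,8,15)) (L (1,8,14,17)))) (N (N (L (1,6,7,13)) (L (1,4,9,11))) (N (L (0,1,18,20)) (L (1,5,17,18))))) (N (N (N (L (1,2,17,20)) (L (0,1,2,5))) (N (L (0,12,16,19)) (L (0,4,15,20)))) (N (N (L (0,1,6,12)) (L (8,9,11,17))) (N (L (7,12,16,18)) (L (1,3,15,18))))))) (N (N (N (N (N (L (0,2,7,11)) (L (0,1,4,16))) (N (L (2,15,16,17)) (L (2,5,14,16)))) (N (N (L (2,7,10,20)) (L (1,3,13,18))) (N (L (3,7,8,10)) (L (0,4,6,19))))) (N (N (N (L (1,5,8,13)) (L (0,8,16,17))) (N (L (0,11,17,19)) (L (5,7,10,18)))) (N (N (L (0,15,16,18)) (L (5,6,11,13))) (N (L (1,6,7,15)) (L (0,5,10,19)))))) (N (N (N (N (L (5,7,12,18)) (L (0,2,6,19)))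 (N (L (1,3,10,19)) (L (2,10,11,13)))) (N (N (L (0,5,12,19)) (L (0,3,8,13))) (N (L (0,4,7,11)) (L (0,1,2,16))))) (N (N (N (L (0,5,13,18)) (L (1,16,17,18))) (N (L (2,5,7,9)) (L (0,6,7,17)))) (N (N (L (0,8,13,14)) (L (3,7,8,12))) (N (L (2,3,13,15)) (L (1,11,15,19))))))))) (N (N (N (N (N (N (N (L (1,2,3,16)) (L (1,7,10,18))) (N (L (1,8,16,20)) (L (0,6,10,16)))) (N (N (L (2,8,9,19)) (L (0,1,10,19))) (N (L (1,4,7,9)) (L (1,6,11,13))))) (N (N (N (L (4,7,11,14)) (L (0,2,13,15))) (N (L (0,7,8,12)) (L (0,4,5,16)))) (N (N (L (3,6,7,17)) (L (11,12,16,18))) (N (L (7,8,9,17)) (L (0,9,15,19)))))) (N (N (N (N (L (1,2,7,9)) (L (0,7,8,10))) (N (L (0,1,13,18)) (L (5,16,17,18)))) (N (N (L (2,4,8,13)) (L (5,11,15,19))) (N (L (1,3,4,16)) (L (2,3,7,11))))) (N (N (N (L (0,6,12,16)) (L (4,6,14,19))) (N (L (1,7,12,18)) (L (3,15,16,18)))) (N (N (L (1,2,13,17)) (L (0,2,5,16))) (N (L (0,1,12,19)) (L (0,4,13,15))))))) (N (N (N (N (N (L (2,7,10,13)) (L (1,3,18,20))) (N (L (0,9,10,18)) (L (1,2,8,18)))) (N (N (L (4,5,17,20)) (L (4,14,15,20))) (N (L (1,2,15,17)) (L (1,2,5,14))))) (N (N (N (L (0,1,15,18)) (L (1,8,9,12)))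 (N (L (6,7,15,16)) (L (1,3,6,12)))) (N (N (L (0,3,4,14)) (L (0,1,8,17))) (N (L (1,2,3,5)) (L (5,11,13,19)))))) (N (N (N (N (L (1,3,6,10)) (L (0,3,8,20))) (N (L (1,8,9,10)) (L (0,6,9,20)))) (N (N (L (3,14,17,18)) (L (0,9,13,19))) (N (L (0,5,6,12)) (L (2,7,18,19))))) (N (N (N (L (0,8,14,20)) (L (0,7,17,19))) (N (L (0,2,3,14)) (L (2,7,12,13)))) (N (N (L (0,5,18,20)) (L (1,6,11,15))) (N (L (0,4,10,12)) (L (4,5,9,11)))))))) (N (N (N (N (N (N (L (1,5,9,18)) (L (0,2,11,15))) (N (L (1,4,11,17)) (L (2,7,16,17)))) (N (N (L (1,8,9,14)) (L (0,2,10,14))) (N (L (1,3,6,14)) (L (1,4,5,10))))) (N (N (N (L (0,4,12,14)) (L (1,13,19,20))) (N (L (1,2,5,12)) (L (10,14,17,18)))) (N (N (L (0,2,3,10)) (L (0,7,16,18))) (N (L (0,8,10,20)) (L (1,2,9,20)))))) (N (N (N (N (L (0,5,8,9)) (L (1,2,5,10))) (N (L (0,3,5,6)) (L (0,4,10,14)))) (N (N (L (0,9,14,18)) (L (0,8,12,20))) (N (L (2,7,13,14)) (L (0,2,3,12))))) (N (N (N (L (6,7,11,16)) (L (1,2,4,6))) (N (L (0,1,11,18)) (L (0,5,6,14)))) (N (N (L (1,4,5,12)) (L (0,3,9,18))) (N (L (0,2,12,14)) (L (0,6,8,18))))))) (N (N (N (N (N (L (0,6,13,17)) (L (1,5,6,16)))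 (N (L (2,6,12,19)) (L (0,5,7,18)))) (N (N (L (1,2,12,16)) (L (2,3,7,15))) (N (L (0,17,19,20)) (L (0,7,8,14))))) (N (N (N (L (2,7,10,11)) (L (1,4,10,16))) (N (L (3,8,18,19)) (L (5,12,13,18)))) (N (N (L (0,2,7,20)) (L (0,4,11,13))) (N (L (0,3,7,8)) (L (3,15,17,19)))))) (N (N (N (N (L (5,10,13,18)) (L (2,4,5,19))) (N (L (1,4,12,16)) (L (0,1,14,19)))) (N (N (L (4,6,12,19)) (L (0,6,14,16))) (N (L (5,6,7,11)) (L (1,7,14,18))))) (N (N (N (L (4,6,13,18)) (L (2,6,10,19))) (N (L (0,1,3,19)) (L (0,2,11,13)))) (N (N (L (0,3,6,16)) (L (0,9,11,19))) (N (L (0,8,9,16)) (L (1,2,10,16)))))))))))) (N (N (N (N (N (N (N (N (N (N (L (1,7,10,20)) (L (0,6,7,8))) (N (L (9,12,13,14)) (L (0,3,7,9)))) (N (N (L (0,1,7,11)) (L (0,2,4,16))) (N (L (0,13,14,17)) (L (0,5,13,15))))) (N (N (N (L (0,10,12,16)) (L (4,10,14,19))) (N (L (0,7,9,14)) (L (3,9,12,13)))) (N (N (L (1,11,12,13)) (L (2,3,12,19))) (N (L (1,3,5,16)) (L (0,3,13,17)))))) (N (N (N (N (L (0,8,11,19)) (L (1,6,7,18))) (N (L (1,5,13,17)) (L (0,1,13,20)))) (N (N (L (5,7,10,15)) (L (0,1,6,19))) (N (L (2,3,10,19)) (L (1,10,11,13))))) (N (N (N (L (2,8,15,16)) (L (3,5,7,11)))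 (N (L (0,3,14,16)) (L (1,7,12,20)))) (N (N (L (3,7,10,17)) (L (2,16,17,18))) (N (L (1,5,7,9)) (L (2,10,14,19))))))) (N (N (N (N (N (L (3,13,16,20)) (L (2,11,13,19))) (N (L (1,2,8,20)) (L (0,2,6,10)))) (N (N (L (0,4,18,20)) (L (3,6,8,11))) (N (L (0,5,10,12)) (L (2,6,11,20))))) (N (N (N (L (1,5,15,17)) (L (0,1,15,20))) (N (L (2,4,17,20)) (L (0,2,4,5)))) (N (N (L (6,8,11,14)) (L (1,5,8,18))) (N (L (0,4,6,12)) (L (6,14,16,19)))))) (N (N (N (N (L (0,3,8,18)) (L (2,4,9,11))) (N (L (0,2,18,20)) (L (2,5,17,18)))) (N (N (L (0,3,5,14)) (L (0,3,15,17))) (N (L (1,2,3,4)) (L (2,8,14,17))))) (N (N (N (L (0,2,6,12)) (L (0,8,14,18))) (N (L (6,13,17,19)) (L (1,3,10,12)))) (N (N (L (0,14,15,17)) (L (5,14,15,20))) (N (L (2,3,8,17)) (L (1,2,4,14)))))))) (N (N (N (N (N (N (L (0,1,9,17)) (L (1,2,5,6))) (N (L (0,3,5,10)) (L (0,4,6,14)))) (N (N (L (2,5,8,11)) (L (3,7,15,16))) (N (L (3,5,11,20)) (L (0,3,11,17))))) (N (N (N (L (0,4,8,9)) (L (1,2,4,10))) (N (L (0,3,4,6)) (L (0,5,10,14)))) (N (N (L (0,1,7,13)) (L (1,3,12,14))) (N (L (0,11,14,17)) (L (0,5,11,15)))))) (N (N (N (N (L (0,5,12,14)) (L (0,12,15,17)))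 (N (L (1,2,4,12)) (L (2,13,15,19)))) (N (N (L (0,8,12,18)) (L (0,2,6,14))) (N (L (1,3,10,14)) (L (1,4,5,6))))) (N (N (N (L (0,8,13,19)) (L (0,3,5,12))) (N (L (1,5,11,17)) (L (0,1,11,20)))) (N (N (L (0,2,3,6)) (L (3,5,9,17))) (N (L (0,2,8,9)) (L (2,12,15,18))))))) (N (N (N (N (N (L (2,3,14,19)) (L (0,11,15,16))) (N (L (0,5,7,20)) (L (9,12,18,19)))) (N (N (L (4,10,12,19)) (L (0,10,14,16))) (N (L (3,9,13,14)) (L (0,7,9,12))))) (N (N (N (L (1,3,11,13)) (L (6,9,19,20))) (N (L (1,5,12,16)) (L (0,12,13,17)))) (N (N (L (0,3,10,16)) (L (0,2,7,18))) (N (L (4,6,7,11)) (L (1,2,6,16)))))) (N (N (N (N (L (0,10,13,17)) (L (1,5,10,16))) (N (L (1,15,18,19)) (L (3,9,16,17)))) (N (N (L (1,11,16,17)) (L (0,5,11,13))) (N (L (0,1,7,15)) (L (0,3,12,16))))) (N (N (N (L (2,6,7,11)) (L (1,4,6,16))) (N (L (9,14,16,17)) (L (0,4,7,18)))) (N (N (L (0,7,9,10)) (L (1,2,7,8))) (N (L (0,12,14,16)) (L (1,3,7,20))))))))) (N (N (N (N (N (N (N (L (1,12,13,20)) (L (0,4,14,19))) (N (L (3,5,11,13)) (L (1,2,5,19)))) (N (N (L (0,9,16,17)) (L (1,5,9,13))) (N (L (1,6,12,19)) (L (3,10,13,17))))) (N (N (N (L (0,1,7,20)) (L (1,5,7,17)))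 (N (L (1,6,13,18)) (L (3,7,9,10)))) (N (N (L (1,7,10,11)) (L (2,4,10,16))) (N (L (10,13,14,17)) (L (5,10,13,15)))))) (N (N (N (N (L (3,7,9,12)) (L (0,9,13,14))) (N (L (3,10,14,16)) (L (2,7,14,18)))) (N (N (L (0,3,7,17)) (L (1,4,5,19))) (N (L (2,4,12,16)) (L (0,2,14,19))))) (N (N (N (L (0,3,9,13)) (L (7,9,12,14))) (N (L (0,6,8,13)) (L (1,10,13,20)))) (N (N (L (0,5,7,15)) (L (0,7,14,17))) (N (L (0,2,3,19)) (L (0,1,11,13))))))) (N (N (N (N (N (L (0,6,8,15)) (L (0,1,10,14))) (N (L (0,3,9,15)) (L (2,4,5,10)))) (N (N (L (2,5,9,18)) (L (0,1,11,15))) (N (L (0,5,7,13)) (L (1,7,16,17))))) (N (N (N (L (0,1,3,10)) (L (2,3,8,9))) (N (L (0,5,9,17)) (L (0,9,14,15)))) (N (N (L (1,3,11,20)) (L (1,2,16,19))) (N (L (1,2,8,11)) (L (0,9,10,11)))))) (N (N (N (N (L (1,6,15,18)) (L (0,5,11,20))) (N (L (0,7,15,16)) (L (0,1,3,12)))) (N (N (L (0,9,11,12)) (L (1,6,8,17))) (N (L (4,8,9,14)) (L (1,3,9,17))))) (N (N (N (L (1,4,8,11)) (L (2,7,8,16))) (N (L (0,1,12,14)) (L (1,3,7,13)))) (N (N (L (3,5,10,14)) (L (2,4,9,20))) (N (L (0,2,11,18)) (L (1,5,9,15)))))))) (N (N (N (N (N (N (L (0,7,11,16)) (L (0,1,2,4)))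 (N (L (0,14,17,20)) (L (0,5,15,20)))) (N (N (L (1,7,10,13)) (L (2,3,18,20))) (N (L (0,9,12,15)) (L (5,10,11,15))))) (N (N (N (L (1,9,10,17)) (L (0,2,8,17))) (N (L (1,4,8,15)) (L (0,3,17,20)))) (N (N (L (0,1,10,12)) (L (1,5,9,11))) (N (L (3,8,14,18)) (L (1,4,17,18)))))) (N (N (N (N (L (0,3,9,11)) (L (0,6,16,19))) (N (L (0,6,8,11)) (L (1,7,18,19)))) (N (N (L (2,3,6,10)) (L (2,4,5,14))) (N (L (1,5,17,20)) (L (0,13,16,20))))) (N (N (N (L (5,10,12,14)) (L (0,9,11,14))) (N (L (0,4,15,18)) (L (4,8,9,12)))) (N (N (L (1,2,8,15)) (L (0,9,10,15))) (N (L (0,1,3,14)) (L (0,4,8,17))))))) (N (N (N (N (N (L (0,4,13,18)) (L (0,2,10,19))) (N (L (1,3,6,19)) (L (1,9,11,16)))) (N (N (L (1,3,13,20)) (L (1,7,12,15))) (N (L (1,2,8,13)) (L (0,9,10,13))))) (N (N (N (L (4,7,12,18)) (L (5,8,16,18))) (N (L (5,7,10,20)) (L (0,7,10,17)))) (N (N (L (0,4,12,19)) (L (0,1,13,15))) (N (L (0,5,7,11)) (L (7,9,10,12)))))) (N (N (N (N (L (0,7,12,17)) (L (3,13,14,17))) (N (L (2,3,4,16)) (L (1,3,7,11)))) (N (N (L (2,6,7,20)) (L (4,6,11,13))) (N (L (0,2,13,18)) (L (0,4,10,19))))) (N (N (N (L (1,16,17,20)) (L (0,1,5,16))) (N (L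 (0,2,12,19)) (L (2,4,14,16)))) (N (N (L (0,9,12,13)) (L (3,7,9,14))) (N (L (1,7,10,15)) (L (0,5,6,19)))))))))) (N (N (N (N (N (N (N (N (L (0,5,8,19)) (L (0,3,12,13))) (N (L (1,11,13,17)) (L (0,5,11,16)))) (N (N (L (0,14,18,19)) (L (3,9,13,17))) (N (L (0,10,16,17)) (L (1,5,10,13))))) (N (N (N (L (0,12,13,14)) (L (1,4,19,20))) (N (L (2,14,17,19)) (L (2,5,15,19)))) (N (N (L (9,13,14,17)) (L (0,3,18,19))) (N (L (1,7,9,11)) (L (1,4,6,13)))))) (N (N (N (N (L (1,5,18,19)) (L (6,11,14,19))) (N (L (3,7,10,12)) (L (0,10,13,14)))) (N (N (L (0,1,5,7)) (L (1,7,17,20))) (N (L (2,4,7,14)) (L (0,11,13,15))))) (N (N (N (L (3,6,11,19)) (L (1,2,6,13))) (N (L (0,3,10,13)) (L (3,6,8,16)))) (N (N (L (1,5,12,13)) (L (0,12,16,17))) (N (L (1,3,11,16)) (L (1,2,19,20))))))) (N (N (N (N (N (L (0,3,10,15)) (L (2,4,5,9))) (N (L (2,8,10,14)) (L (0,1,9,14)))) (N (N (L (0,3,11,14)) (L (2,15,16,19))) (N (L (1,5,12,15)) (L (1,12,14,17))))) (N (N (N (L (0,1,6,8)) (L (0,10,14,15))) (N (L (0,1,3,9)) (L (2,3,8,10)))) (N (N (L (5,9,10,12)) (L (11,14,15,20))) (N (L (0,8,16,19)) (L (4,8,12,14)))))) (N (N (N (N (L (1,3,5,11)) (L (2,5,13,19)))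 (N (L (0,12,14,15)) (L (0,5,12,17)))) (N (N (L (4,8,10,14)) (L (1,3,10,17))) (N (L (0,2,6,17)) (L (2,5,6,20))))) (N (N (N (L (1,11,15,17)) (L (1,5,11,14))) (N (L (0,1,7,16)) (L (0,2,4,11)))) (N (N (L (0,6,7,19)) (L (1,5,10,15))) (N (L (1,16,18,19)) (L (2,4,10,20)))))))) (N (N (N (N (N (N (L (0,11,12,14)) (L (3,7,11,13))) (N (L (1,3,5,15)) (L (1,3,14,17)))) (N (N (L (0,1,2,18)) (L (5,9,11,15))) (N (L (1,7,9,13)) (L (1,4,6,11))))) (N (N (N (L (3,5,9,10)) (L (0,2,4,15))) (N (L (5,6,8,10)) (L (0,1,5,20)))) (N (N (L (6,16,17,19)) (L (3,9,11,17))) (N (L (0,1,9,12)) (L (1,5,10,11)))))) (N (N (N (N (L (2,5,14,18)) (L (1,2,6,11))) (N (L (0,1,4,18)) (L (3,5,9,12)))) (N (N (L (1,5,11,12)) (L (0,1,9,10))) (N (L (0,3,14,15)) (L (0,3,5,17))))) (N (N (N (L (5,7,10,16)) (L (2,3,5,18))) (N (L (0,8,17,18)) (L (0,10,11,14)))) (N (N (L (1,2,4,17)) (L (2,3,8,14))) (N (L (0,5,14,17)) (L (1,13,14,16))))))) (N (N (N (N (N (L (2,4,7,10)) (L (1,10,11,16))) (N (L (1,8,10,19)) (L (0,2,9,19)))) (N (N (L (1,5,16,17)) (L (0,1,16,20))) (N (L (3,9,10,16)) (L (2,7,9,18))))) (N (N (N (L (2,5,6,7)) (L (0,7,9,17)))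 (N (L (3,6,15,19)) (L (2,13,17,18)))) (N (N (L (0,3,13,14)) (L (9,17,18,19))) (N (L (2,8,13,15)) (L (4,5,11,19)))))) (N (N (N (N (L (0,14,16,17)) (L (0,5,15,16))) (N (L (0,7,11,20)) (L (0,2,4,13)))) (N (N (L (9,12,14,16)) (L (0,4,9,19))) (N (L (11,18,19,20)) (L (2,3,16,18))))) (N (N (N (L (1,3,5,13)) (L (0,3,16,17))) (N (L (1,11,12,16)) (L (2,4,7,12)))) (N (N (L (1,7,9,15)) (L (3,9,12,16))) (N (L (0,10,12,13)) (L (3,7,10,14))))))))) (N (N (N (N (N (N (N (L (0,2,16,18)) (L (0,3,7,10))) (N (L (1,2,6,7)) (L (4,6,11,16)))) (N (N (L (2,3,4,13)) (L (1,4,11,19))) (N (L (1,4,8,16)) (L (1,5,7,12))))) (N (N (N (L (0,7,10,14)) (L (3,10,12,13))) (N (L (0,9,12,16)) (L (4,9,14,19)))) (N (N (L (0,7,11,15)) (L (2,4,13,14))) (N (L (1,13,17,20)) (L (0,1,5,13)))))) (N (N (N (N (L (1,2,8,16)) (L (0,9,10,16))) (N (L (1,3,16,20)) (L (0,7,12,14)))) (N (N (L (1,4,6,7)) (L (1,9,11,13))) (N (L (0,4,16,18)) (L (7,9,14,17))))) (N (N (N (L (2,4,16,17)) (L (1,7,11,17))) (N (L (0,3,7,12)) (L (0,1,15,16)))) (N (N (L (1,5,7,10)) (L (0,6,15,19))) (N (L (3,7,9,17)) (L (5,8,13,18))))))) (N (N (N (N (N (L (1,6,8,10)) (L (0,1,13,16)))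 (N (L (1,3,9,10)) (L (0,2,3,8)))) (N (N (L (0,5,9,12)) (L (1,3,4,18))) (N (L (8,10,16,19)) (L (0,6,13,19))))) (N (N (N (L (0,3,14,20)) (L (1,7,12,16))) (N (L (0,2,8,14)) (L (0,6,12,18)))) (N (N (L (1,4,14,18)) (L (3,8,17,18))) (N (L (0,2,5,18)) (L (1,9,11,15)))))) (N (N (N (N (L (0,6,10,18)) (L (1,8,18,20))) (N (L (1,7,10,16)) (L (1,2,3,18)))) (N (N (L (0,1,14,17)) (L (0,1,5,15))) (N (L (0,7,11,13)) (L (0,2,4,20))))) (N (N (N (L (0,4,5,18)) (L (1,3,9,12))) (N (L (0,9,11,17)) (L (1,6,8,12)))) (N (N (L (0,4,8,14)) (L (0,1,3,17))) (N (L (1,2,5,8)) (L (0,5,9,10)))))))) (N (N (N (N (N (N (L (0,3,5,9)) (L (1,4,12,18))) (N (L (0,1,10,17)) (L (1,5,10,20)))) (N (N (L (0,7,13,15)) (L (0,3,12,20))) (N (L (0,6,14,18)) (L (0,1,5,11))))) (N (N (N (L (0,9,15,17)) (L (0,5,9,14))) (N (L (0,4,8,10)) (L (1,2,4,9)))) (N (N (L (0,12,14,20)) (L (0,8,9,18))) (N (L (4,8,11,20)) (L (0,3,6,18)))))) (N (N (N (N (L (0,5,7,16)) (L (0,4,8,12))) (N (L (1,5,6,18)) (L (0,11,15,20)))) (N (N (L (1,3,9,14)) (L (4,8,9,17))) (N (L (1,6,8,14)) (L (0,10,14,20))))) (N (N (N (L (1,5,12,20)) (L (0,1,12,17))) (N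 (L (1,4,10,18)) (L (1,2,13,19)))) (N (N (L (0,2,8,10)) (L (1,2,6,20))) (N (L (0,3,10,20)) (L (1,3,6,8))))))) (N (N (N (N (N (L (2,4,12,13)) (L (1,2,15,19))) (N (L (0,4,17,19)) (L (1,3,5,7)))) (N (N (L (3,10,13,14)) (L (0,7,10,12))) (N (L (4,7,17,18)) (L (0,9,14,16))))) (N (N (N (L (0,2,4,7)) (L (0,1,11,16))) (N (L (0,1,8,19)) (L (1,7,15,17)))) (N (N (L (0,6,8,16)) (L (1,10,16,20))) (N (L (0,3,9,16)) (L (0,6,11,19)))))) (N (N (N (N (L (2,7,17,18)) (L (3,10,16,17))) (N (L (0,9,13,17)) (L (1,5,9,16)))) (N (N (L (0,2,17,19)) (L (2,5,19,20))) (N (L (1,12,16,20)) (L (0,3,7,14))))) (N (N (N (L (10,14,16,17)) (L (5,10,15,16))) (N (L (7,9,12,17)) (L (2,4,10,13)))) (N (N (L (1,6,16,18)) (L (4,9,10,19))) (N (L (5,8,14,19)) (L (3,12,13,14))))))))))) (N (N (N (N (N (N (N (N (N (L (0,1,3,18)) (L (4,5,9,12))) (N (L (3,6,7,16)) (L (1,6,12,15)))) (N (N (L (0,4,14,15)) (L (0,4,5,17))) (N (L (1,2,5,15)) (L (0,9,11,18))))) (N (N (N (L (0,5,6,11)) (L (0,1,14,18))) (N (L (5,10,13,19)) (L (2,4,5,18)))) (N (N (L (1,8,17,20)) (L (0,1,5,8))) (N (L (1,2,3,17)) (L (2,4,8,14)))))) (N (N (N (N (L (1,4,5,15)) (L (1,4,14,17)))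 (N (L (0,2,14,15)) (L (0,2,5,17)))) (N (N (L (1,9,16,19)) (L (1,3,6,11))) (N (L (0,2,10,11)) (L (1,8,9,11))))) (N (N (N (L (1,3,4,17)) (L (0,5,7,19))) (N (L (4,5,9,10)) (L (0,2,3,15)))) (N (N (L (0,17,18,20)) (L (8,10,11,15))) (N (L (6,7,13,17)) (L (4,9,11,17))))))) (N (N (N (N (N (L (0,1,11,19)) (L (0,2,3,13))) (N (L (1,6,10,13)) (L (0,1,8,16)))) (N (N (L (1,7,11,18)) (L (0,6,8,19))) (N (L (0,6,11,16)) (L (0,3,9,19))))) (N (N (N (L (0,2,13,14)) (L (2,3,7,12))) (N (L (1,4,5,13)) (L (0,4,16,17)))) (N (N (L (3,5,6,7)) (L (4,7,10,14))) (N (L (0,9,14,19)) (L (3,13,17,18)))))) (N (N (N (N (L (5,10,15,19)) (L (0,1,6,7))) (N (L (2,3,7,10)) (L (1,13,18,20)))) (N (N (L (0,7,8,11)) (L (1,6,18,19))) (N (L (4,7,12,14)) (L (0,3,4,13))))) (N (N (N (L (3,10,17,19)) (L (1,6,12,13))) (N (L (1,5,9,19)) (L (2,7,10,14)))) (N (N (L (1,2,5,13)) (L (0,2,16,17))) (N (L (0,4,13,14)) (L (1,12,19,20)))))))) (N (N (N (N (N (N (L (0,5,6,13)) (L (1,6,16,17))) (N (L (4,9,14,16)) (L (0,7,17,18)))) (N (N (L (2,3,7,14)) (L (0,2,12,13))) (N (L (0,5,19,20)) (L (7,9,12,18))))) (N (N (N (L (0,4,10,13)) (L (0,2,18,19)))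 (N (L (4,6,11,19)) (L (3,4,9,16)))) (N (N (L (1,4,11,16)) (L (6,7,9,20))) (N (L (3,14,17,19)) (L (0,9,13,18)))))) (N (N (N (N (L (10,13,17,18)) (L (2,4,17,19))) (N (L (0,1,15,19)) (L (0,4,12,13)))) (N (N (L (0,6,15,16)) (L (5,11,13,18))) (N (L (1,7,15,18)) (L (3,12,16,18))))) (N (N (N (L (0,9,10,19)) (L (1,2,8,19))) (N (L (1,2,11,16)) (L (1,3,19,20)))) (N (N (L (2,6,11,19)) (L (1,3,6,13))) (N (L (0,2,10,13)) (L (0,4,18,19))))))) (N (N (N (N (N (L (0,2,11,14)) (L (3,15,16,19))) (N (L (1,4,5,11)) (L (2,5,7,16)))) (N (N (L (0,1,12,18)) (L (1,8,9,15))) (N (L (3,8,10,14)) (L (1,3,6,15))))) (N (N (N (L (0,1,13,19)) (L (0,2,3,11))) (N (L (1,2,12,17)) (L (0,8,11,20)))) (N (N (L (1,7,13,18)) (L (2,3,10,20))) (N (L (0,1,2,9)) (L (1,5,6,17)))))) (N (N (N (N (L (0,8,9,17)) (L (1,2,10,17))) (N (L (0,3,6,17)) (L (2,3,5,9)))) (N (N (L (1,2,5,11)) (L (0,9,15,18))) (N (L (0,4,11,14)) (L (2,7,13,15))))) (N (N (N (L (0,1,4,9)) (L (2,4,8,10))) (N (L (0,5,6,15)) (L (0,6,14,17)))) (N (N (L (0,7,8,13)) (L (3,8,12,14))) (N (L (2,8,9,18)) (L (0,1,10,18))))))))) (N (N (N (N (N (N (N (L (1,8,11,17)) (L (0,2,12,20)))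 (N (L (0,5,13,19)) (L (0,3,8,12)))) (N (N (L (0,2,5,9)) (L (1,5,8,10))) (N (L (1,4,9,14)) (L (3,8,9,17))))) (N (N (N (L (1,3,10,18)) (L (1,2,7,16))) (N (L (0,8,12,14)) (L (0,2,6,18)))) (N (N (L (0,4,10,20)) (L (1,4,6,8))) (N (L (0,5,12,18)) (L (1,3,4,9)))))) (N (N (N (N (L (0,1,6,15)) (L (0,8,10,14))) (N (L (0,4,5,9)) (L (1,3,12,18)))) (N (N (L (7,11,17,19)) (L (0,5,10,18))) (N (L (0,15,16,19)) (L (0,4,12,20))))) (N (N (N (L (0,3,8,10)) (L (1,2,3,9))) (N (L (0,2,10,20)) (L (1,2,6,8)))) (N (N (L (3,8,11,20)) (L (0,4,6,18))) (N (L (1,5,8,12)) (L (1,3,13,19))))))) (N (N (N (N (N (L (0,12,16,18)) (L (4,14,18,19))) (N (L (1,6,7,12)) (L (3,6,15,16)))) (N (N (L (2,11,13,15)) (L (0,4,7,14))) (N (L (4,5,11,16)) (L (1,2,5,7))))) (N (N (N (L (1,7,18,20)) (L (2,3,10,13))) (N (L (0,1,6,13)) (L (1,8,10,16)))) (N (N (L (0,1,19,20)) (L (1,5,17,19))) (N (L (2,12,16,17)) (L (0,8,11,13)))))) (N (N (N (N (L (0,3,17,19)) (L (1,4,5,7))) (N (L (2,3,12,13)) (L (0,2,7,14)))) (N (N (L (3,7,17,18)) (L (2,10,16,17))) (N (L (4,10,13,14)) (L (2,14,18,19))))) (N (N (N (L (0,5,15,19)) (L (0,14,17,19))) (N (L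 (0,2,3,7)) (L (0,10,16,18)))) (N (N (L (0,4,9,16)) (L (7,14,17,18))) (N (L (2,3,18,19)) (L (1,11,13,18)))))))) (N (N (N (N (N (N (L (1,4,16,20)) (L (1,12,15,19))) (N (L (2,5,15,16)) (L (2,14,16,17)))) (N (N (L (0,3,16,18)) (L (0,2,7,10))) (N (L (1,3,6,7)) (L (6,12,15,16))))) (N (N (N (L (0,4,7,12)) (L (0,5,8,16))) (N (L (0,5,11,19)) (L (7,10,17,18)))) (N (N (L (4,7,9,17)) (L (0,14,16,18))) (N (L (5,7,11,18)) (L (0,10,17,19)))))) (N (N (N (N (L (2,6,19,20)) (L (3,6,11,16))) (N (L (3,6,8,19)) (L (0,4,7,10)))) (N (N (L (0,7,9,18)) (L (4,14,16,17))) (N (L (1,2,16,20)) (L (1,3,11,19))))) (N (N (N (L (0,13,17,18)) (L (1,5,16,18))) (N (L (1,10,15,19)) (L (0,5,6,7)))) (N (N (L (3,4,16,17)) (L (0,8,13,15))) (N (L (0,2,7,12)) (L (2,3,13,14))))))) (N (N (N (N (N (L (1,10,13,19)) (L (1,2,4,18))) (N (L (0,1,6,11)) (L (0,5,14,18)))) (N (N (L (0,11,16,19)) (L (0,2,3,20))) (N (L (1,2,9,10)) (L (5,7,14,19))))) (N (N (N (L (2,10,11,14)) (L (2,8,17,18))) (N (L (0,3,5,18)) (L (1,4,9,12)))) (N (N (L (0,2,14,20)) (L (2,5,14,17))) (N (L (0,3,8,14)) (L (0,1,4,17)))))) (N (N (N (N (L (1,4,9,10)) (L (0,2,4,8)))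 (N (L (1,8,15,17)) (L (0,1,7,19)))) (N (N (L (7,8,10,13)) (L (0,6,7,16))) (N (L (5,6,11,14)) (L (2,10,12,15))))) (N (N (N (L (1,2,5,20)) (L (0,1,2,17))) (N (L (0,4,14,20)) (L (1,12,13,19)))) (N (N (L (0,8,10,12)) (L (1,2,9,12))) (N (L (1,3,14,18)) (L (3,5,6,11)))))))))) (N (N (N (N (N (N (N (N (L (1,2,3,12)) (L (2,7,15,16))) (N (L (1,8,12,20)) (L (0,2,11,17)))) (N (N (L (1,4,10,14)) (L (1,3,5,6))) (N (L (0,2,5,10)) (L (1,5,8,9))))) (N (N (N (L (1,6,8,18)) (L (0,7,11,19))) (N (L (0,7,8,16)) (L (0,4,5,12)))) (N (N (L (1,5,6,14)) (L (1,3,4,10))) (N (L (0,2,4,6)) (L (4,5,9,17)))))) (N (N (N (N (L (0,4,5,10)) (L (0,3,6,14))) (N (L (0,12,18,20)) (L (0,8,9,14)))) (N (N (L (4,5,11,20)) (L (0,4,11,17))) (N (L (1,2,11,15)) (L (0,5,9,18))))) (N (N (N (L (0,2,9,20)) (L (1,8,10,20))) (N (L (0,3,8,9)) (L (1,2,3,10)))) (N (N (L (2,9,10,11)) (L (0,1,8,11))) (N (L (0,1,16,19)) (L (1,4,12,14))))))) (N (N (N (N (N (L (0,7,14,18)) (L (3,12,13,18))) (N (L (0,6,13,15)) (L (5,11,16,18)))) (N (N (L (0,5,7,8)) (L (0,4,12,16))) (N (L (10,16,17,18)) (L (2,3,7,17))))) (N (N (N (L (0,2,10,16)) (L (0,3,7,18)))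 (N (L (1,9,11,19)) (L (1,3,6,16)))) (N (N (L (1,2,11,13)) (L (1,4,7,20))) (N (L (2,7,14,17)) (L (2,5,7,15)))))) (N (N (N (N (L (0,1,5,19)) (L (1,17,19,20))) (N (L (2,4,14,19)) (L (0,2,12,16)))) (N (N (L (1,5,7,18)) (L (6,7,11,14))) (N (L (0,5,6,16)) (L (1,6,13,17))))) (N (N (N (L (4,7,14,17)) (L (0,9,16,18))) (N (L (1,4,11,13)) (L (1,2,7,20)))) (N (N (L (3,6,7,11)) (L (3,4,9,13))) (N (L (0,4,10,16)) (L (4,6,8,13)))))))) (N (N (N (N (N (N (L (3,12,14,19)) (L (0,3,4,16))) (N (L (4,9,10,13)) (L (2,7,12,17)))) (N (N (L (2,4,10,19)) (L (1,16,18,20))) (N (L (1,7,8,10)) (L (0,2,7,9))))) (N (N (N (L (0,4,14,16)) (L (7,9,17,18))) (N (L (1,2,5,16)) (L (0,2,13,17)))) (N (N (L (2,5,6,19)) (L (0,7,12,18))) (N (L (3,6,7,15)) (L (1,6,12,16)))))) (N (N (N (N (L (0,6,11,13)) (L (0,4,7,9))) (N (L (7,11,18,20)) (L (2,4,13,18)))) (N (N (L (1,6,10,16)) (L (0,1,8,13))) (N (L (0,7,10,18)) (L (0,2,3,16))))) (N (N (N (L (1,9,15,19)) (L (3,16,17,18))) (N (L (4,5,6,19)) (L (3,10,14,19)))) (N (N (L (1,4,5,16)) (L (0,4,13,17))) (N (L (0,2,14,16)) (L (2,4,12,19))))))) (N (N (N (N (N (L (11,12,14,18)) (L (1,5,6,12)))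 (N (L (0,4,8,18)) (L (2,3,9,11)))) (N (N (L (1,6,9,20)) (L (0,8,9,10))) (N (L (0,4,5,14)) (L (0,3,6,10))))) (N (N (N (L (6,7,16,17)) (L (1,4,10,12))) (N (L (0,1,17,18)) (L (1,5,18,20)))) (N (N (L (2,4,8,17)) (L (1,2,3,14))) (N (L (0,6,10,14)) (L (0,1,8,15)))))) (N (N (N (N (L (0,2,5,14)) (L (0,2,15,17))) (N (L (3,5,8,15)) (L (2,7,11,16)))) (N (N (L (0,2,8,18)) (L (0,6,12,14))) (N (L (0,3,18,20)) (L (3,5,17,18))))) (N (N (N (L (2,3,17,20)) (L (0,2,3,5))) (N (L (1,5,6,10)) (L (0,5,8,20)))) (N (N (L (0,3,6,12)) (L (6,7,13,14))) (N (L (0,8,9,12)) (L (0,14,18,20))))))))) (N (N (N (N (N (N (N (L (0,5,17,18)) (L (0,14,15,18))) (N (L (0,4,9,11)) (L (0,6,7,13)))) (N (N (L (0,8,14,17)) (L (0,1,3,4))) (N (L (2,3,15,17)) (L (2,3,5,14))))) (N (N (N (L (0,3,15,18)) (L (3,8,9,12))) (N (L (2,8,14,18)) (L (2,9,12,20)))) (N (N (L (0,1,4,14)) (L (0,3,8,17))) (N (L (1,8,11,12)) (L (0,2,17,20)))))) (N (N (N (N (L (1,5,8,17)) (L (0,1,8,20))) (N (L (0,11,13,19)) (L (0,1,2,3)))) (N (N (L (0,2,9,11)) (L (1,5,15,18))) (N (L (1,10,16,19)) (L (2,4,18,20))))) (N (N (N (L (1,3,8,15)) (L (0,4,17,20)))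 (N (L (0,1,2,14)) (L (8,9,10,14)))) (N (N (L (4,8,14,18)) (L (1,3,17,18))) (N (L (0,11,12,18)) (L (5,9,10,18))))))) (N (N (N (N (N (L (1,2,13,20)) (L (1,4,7,11))) (N (L (1,3,8,13)) (L (1,5,12,19)))) (N (N (L (4,6,7,8)) (L (0,3,10,19))) (N (L (1,2,6,19)) (L (3,6,11,13))))) (N (N (N (L (0,11,15,19)) (L (2,3,14,16))) (N (L (3,4,13,17)) (L (0,8,15,16)))) (N (N (L (0,10,14,19)) (L (4,10,12,16))) (N (L (0,16,17,18)) (L (1,5,13,18)))))) (N (N (N (N (L (1,4,6,19)) (L (6,12,13,15))) (N (L (0,3,13,18)) (L (7,12,14,18)))) (N (N (L (2,5,13,15)) (L (2,13,14,17))) (N (L (1,4,13,20)) (L (0,12,14,19))))) (N (N (N (L (1,5,10,19)) (L (0,6,7,15))) (N (L (3,7,12,18)) (L (0,13,14,18)))) (N (N (L (2,3,13,17)) (L (1,11,17,19))) (N (L (0,3,12,19)) (L (0,5,8,13)))))))) (N (N (N (N (N (N (L (4,10,14,16)) (L (0,10,12,19))) (N (L (4,7,9,12)) (L (2,10,13,17)))) (N (N (L (2,3,12,16)) (L (1,2,7,15))) (N (L (0,4,7,17)) (L (1,3,5,19))))) (N (N (N (L (2,4,7,18)) (L (1,11,16,18))) (N (L (0,4,9,13)) (L (0,6,7,11)))) (N (N (L (0,2,4,19)) (L (0,10,13,18))) (N (L (0,1,7,8)) (L (1,15,17,19)))))) (N (N (N (N (L (0,2,7,17)) (L (2,5,7,20)))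 (N (L (2,11,15,16)) (L (0,3,14,19)))) (N (N (L (2,7,9,12)) (L (3,6,13,15))) (N (L (0,12,13,18)) (L (3,7,14,18))))) (N (N (N (L (2,12,13,17)) (L (0,8,11,16))) (N (L (5,7,8,14)) (L (4,12,14,16)))) (N (N (L (0,1,6,16)) (L (1,8,10,13))) (N (L (9,12,17,19)) (L (2,3,10,16))))))) (N (N (N (N (N (L (0,13,15,19)) (L (0,1,4,12))) (N (L (1,10,17,18)) (L (1,8,11,14)))) (N (N (L (3,8,9,14)) (L (1,4,9,17))) (N (L (0,2,9,15)) (L (1,5,11,18))))) (N (N (N (L (1,2,11,20)) (L (0,8,12,17))) (N (L (1,3,8,11)) (L (2,8,13,19)))) (N (N (L (0,1,2,10)) (L (2,6,8,20))) (N (L (4,5,10,14)) (L (2,3,9,20)))))) (N (N (N (N (L (0,4,9,15)) (L (2,3,5,10))) (N (L (0,1,5,6)) (L (0,11,14,18)))) (N (N (L (0,5,16,19)) (L (1,13,17,19))) (N (L (8,9,10,12)) (L (0,1,2,12))))) (N (N (N (L (2,5,10,14)) (L (1,7,9,19))) (N (L (0,1,4,10)) (L (2,4,8,9)))) (N (N (L (1,8,12,15)) (L (0,1,9,18))) (N (L (1,4,11,20)) (L (1,2,7,13))))))))))))"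

lemma small_nums: "xor (n::nat) (Suc (Suc (Suc 0))) = xor n 3" "xor (n::nat) (Suc (Suc 0)) = xor n 2"
  "xor (Suc (Suc (Suc 0))) (n::nat) = xor 3 n" "xor (Suc (Suc 0)) (n::nat) = xor 2 n"
  by (simp_all add: numeral_eq_Suc)

lemma TT_ok: "chkT 11 0 TT"
  by (simp add: TT_def okq_def hv_vals small_nums)

lemma wit: "s0 < 2048 \<Longrightarrow> \<exists>a b c d. a < b \<and> b < c \<and> c < d \<and> d < 21 \<and>
   xor (hv a) (xor (hv b) (xor (hv c) (hv d))) = s0"
proof -
  assume "s0 < 2048"
  then have "okq (0 + s0) (lookT 11 TT s0)" using chkT_sound[OF TT_ok] by simp
  then show ?thesis by (cases "lookT 11 TT s0") (auto simp: okq_def)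
qed

definition Hm :: "nat \<Rightarrow> nat \<Rightarrow> bit" where
  "Hm i c = (if i < 11 then of_bool (bit (hv (c div 32)) i)
     else if i < 31 then coeff (pn (c div 32) ^ ((i - 11) div 5) * pn (c mod 32) mod P) ((i - 11) mod 5)
     else 0)"

lemma of_bool4: "(of_bool p :: bit) + of_bool q + of_bool r + of_bool t = of_bool (p \<noteq> (q \<noteq> (r \<noteq> t)))"
  by (cases p; cases q; cases r; cases t) simp_all

lemma sum4: "c1 \<noteq> c2 \<Longrightarrow> c1 \<noteq> c3 \<Longrightarrow> c1 \<noteq> c4 \<Longrightarrow> c2 \<noteq> c3 \<Longrightarrow> c2 \<noteq> c4 \<Longrightarrow> c3 \<noteq> c4 \<Longrightarrow>
  (\<Sum>j\<in>{c1,c2,c3,c4}. f j) = f c1 + f c2 + f c3 + f c4"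
  by (simp add: ac_simps)

lemma D_add: "a \<in> D \<Longrightarrow> b \<in> D \<Longrightarrow> a + b \<in> D"
  unfolding D_def using degree_add_le by (metis max.bounded_iff mem_Collect_eq order.strict_iff_not le_less_trans not_le)

lemma T_in_D: "[:a0, a1, a2, a3, a4:] \<in> D"
proof -
  have "degree [:a0, a1, a2, a3, a4:] \<le> 4"
    by (rule degree_le) (auto simp: coeff_pCons split: nat.splits)
  then show ?thesis by (simp add: D_def)
qed

lemma coeff_T: "b < 5 \<Longrightarrow> coeff [:f 0, f 1, f 2, f 3, f (4::nat):] b = f b"
proof -
  assume "b < 5"
  then have "b = 0 \<or> b = 1 \<or> b = 2 \<or> b = 3 \<or> b = 4" by linarith
  then show ?thesis by (auto simp: numeral_eq_Suc)
qed

lemma covers_Hm: "covers 31 690 Hm 4"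
  unfolding covers_def
proof
  fix s assume s: "s \<in> vecs 31"
  define s0 where "s0 = horner_sum of_bool (2::nat) (map (\<lambda>i. s i = 1) [0..<11])"
  have "s0 < 2 ^ length (map (\<lambda>i. s i = 1) [0..<11])"
    unfolding s0_def by (rule horner_sum_of_bool_2_less)
  then have s0_lt: "s0 < 2048" by simp
  have s0_bit: "i < 11 \<Longrightarrow> bit s0 i \<longleftrightarrow> s i = 1" for i
    by (simp add: s0_def bit_horner_sum_bit_iff)
  obtain a b c d where abcd: "a < b" "b < c" "c < d" "d < 21"
     and hx: "xor (hv a) (xor (hv b) (xor (hv c) (hv d))) = s0"
    using wit[OF s0_lt] by blast
  define T where "T k = [:s (11 + 5*k), s (11 + 5*k + 1), s (11 + 5*k + 2), s (11 + 5*k + 3), s (11 + 5*k + 4):]" for k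
  have TD: "T k \<in> D" for k unfolding T_def by (rule T_in_D)
  have xD: "pn a \<in> D" "pn b \<in> D" "pn c \<in> D" "pn d \<in> D" using degree_pn by (auto simp: D_def)
  have xne: "pn a \<noteq> pn b" "pn a \<noteq> pn c" "pn a \<noteq> pn d" "pn b \<noteq> pn c" "pn b \<noteq> pn d" "pn c \<noteq> pn d"
    using abcd pn_inj[of a b] pn_inj[of a c] pn_inj[of a d] pn_inj[of b c] pn_inj[of b d] pn_inj[of c d]
    by auto
  obtain b1 b2 b3 b4 where bD: "b1 \<in> D" "b2 \<in> D" "b3 \<in> D" "b4 \<in> D"
    and eqs: "(b1 + b2 + b3 + b4) mod P = T 0"
     "(pn a*b1 + pn b*b2 + pn c*b3 + pn d*b4) mod P = T 1"
     "(pn a^2*b1 + pn b^2*b2 + pn c^2*b3 + pn d^2*b4) mod P = T 2"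
     "(pn a^3*b1 + pn b^3*b2 + pn c^3*b3 + pn d^3*b4) mod P = T 3"
    using solve[OF xD xne TD[of 0] TD[of 1] TD[of 2] TD[of 3]] by blast
  have eqk: "k < 4 \<Longrightarrow> (pn a^k*b1 + pn b^k*b2 + pn c^k*b3 + pn d^k*b4) mod P = T k" for k
  proof -
    assume "k < 4"
    then have "k = 0 \<or> k = 1 \<or> k = 2 \<or> k = 3" by linarith
    then show ?thesis using eqs by auto
  qed
  obtain n1 n2 n3 n4 where nn: "n1 < 32" "n2 < 32" "n3 < 32" "n4 < 32"
    "pn n1 = b1" "pn n2 = b2" "pn n3 = b3" "pn n4 = b4"
    using bD unfolding D_eq by (auto simp: image_iff)
  define c1 where "c1 = 32 * a + n1"
  define c2 where "c2 = 32 * b + n2"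
  define c3 where "c3 = 32 * c + n3"
  define c4 where "c4 = 32 * d + n4"
  have cdm: "c1 div 32 = a" "c2 div 32 = b" "c3 div 32 = c" "c4 div 32 = d"
     "c1 mod 32 = n1" "c2 mod 32 = n2" "c3 mod 32 = n3" "c4 mod 32 = n4"
    using nn by (simp_all add: c1_def c2_def c3_def c4_def)
  have cne: "c1 \<noteq> c2" "c1 \<noteq> c3" "c1 \<noteq> c4" "c2 \<noteq> c3" "c2 \<noteq> c4" "c3 \<noteq> c4"
    using cdm abcd by (metis less_irrefl order.strict_trans)+
  have clt: "c1 < 690" "c2 < 690" "c3 < 690" "c4 < 690"
    using nn abcd by (simp_all add: c1_def c2_def c3_def c4_def)
  let ?S = "{c1, c2, c3, c4}"
  have "?S \<subseteq> {..<690}" using clt by auto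
  moreover have "card ?S \<le> 4" using cne by simp
  moreover have "s = col_sum 31 Hm ?S"
  proof
    fix i
    show "s i = col_sum 31 Hm ?S i"
    proof (cases "i < 31")
      case False
      then show ?thesis using s by (simp add: vecs_def col_sum_def)
    next
      case i31: True
      have cs: "col_sum 31 Hm ?S i = Hm i c1 + Hm i c2 + Hm i c3 + Hm i c4"
        using i31 by (simp add: col_sum_def sum4[OF cne] del: add_bit_eq_xor)
      show ?thesis
      proof (cases "i < 11")
        case True
        have "Hm i c1 + Hm i c2 + Hm i c3 + Hm i c4 = of_bool (bit s0 i)"
          using True by (simp add: Hm_def cdm hx[symmetric] of_bool4 bit_xor_iff del: add_bit_eq_xor)
        also have "\<dots> = s i" using True s0_bit[OF True] bit_cases'[of "s i"] by auto
        finally show ?thesis using cs by simp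
      next
        case False
        define k where "k = (i - 11) div 5"
        define bb where "bb = (i - 11) mod 5"
        have k4: "k < 4" using i31 False by (simp add: k_def)
        have bb5: "bb < 5" by (simp add: bb_def)
        have ieq: "i = 11 + 5 * k + bb" using False by (simp add: k_def bb_def)
        have "Hm i c1 + Hm i c2 + Hm i c3 + Hm i c4 =
           coeff ((pn a^k*b1 + pn b^k*b2 + pn c^k*b3 + pn d^k*b4) mod P) bb"
          using i31 False by (simp add: Hm_def cdm nn k_def bb_def poly_mod_add_left del: add_bit_eq_xor)
        also have "\<dots> = coeff (T k) bb" using eqk[OF k4] by simp
        also have "\<dots> = s (11 + 5 * k + bb)"
          unfolding T_def using coeff_T[OF bb5, of "\<lambda>j. s (11 + 5 * k + j)"] by simp
        finally show ?thesis using cs ieq by simp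
      qed
    qed
  qed
  ultimately show "\<exists>S\<subseteq>{..<690}. card S \<le> 4 \<and> s = col_sum 31 Hm S" by blast
qed


declare sum_of_bool_eq[simp del] mult_bit_eq_and[simp del]

lemma UNIV_bit: "(UNIV :: bit set) = {0, 1}"
  using bit_cases' by auto

lemma vecs_Suc: "vecs (Suc n) = (\<lambda>(x, b). x(n := b)) ` (vecs n \<times> UNIV)"
proof
  show "(\<lambda>(x, b). x(n := b)) ` (vecs n \<times> UNIV) \<subseteq> vecs (Suc n)"
    by (auto simp: vecs_def)
  show "vecs (Suc n) \<subseteq> (\<lambda>(x, b). x(n := b)) ` (vecs n \<times> UNIV)"
  proof
    fix z assume z: "z \<in> vecs (Suc n)"
    have "z = (\<lambda>(x, b). x(n := b)) (z(n := 0), z n)" by simp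
    moreover have "(z(n := 0), z n) \<in> vecs n \<times> UNIV" using z by (auto simp: vecs_def)
    ultimately show "z \<in> (\<lambda>(x, b). x(n := b)) ` (vecs n \<times> UNIV)" by blast
  qed
qed

lemma inj_vecs_Suc: "inj_on (\<lambda>(x, b). x(n := b)) (vecs n \<times> UNIV)"
proof (rule inj_onI)
  fix u v assume u: "u \<in> vecs n \<times> UNIV" and v: "v \<in> vecs n \<times> UNIV"
    and eq: "(\<lambda>(x, b). x(n := b)) u = (\<lambda>(x, b). x(n := b)) v"
  obtain x b where xb: "u = (x, b)" by (cases u)
  obtain y c where yc: "v = (y, c)" by (cases v)
  have e: "x(n := b) = y(n := c)" using eq xb yc by simp
  have "b = c" using fun_cong[OF e, of n] by simp
  moreover have "x = y"
  proof
    fix j show "x j = y j"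
    proof (cases "j = n")
      case True then show ?thesis using u v xb yc by (simp add: vecs_def)
    next
      case False then show ?thesis using fun_cong[OF e, of j] by simp
    qed
  qed
  ultimately show "u = v" using xb yc by simp
qed

lemma card_vecs: "finite (vecs n) \<and> card (vecs n) = 2 ^ n"
proof (induction n)
  case 0
  have "vecs 0 = {\<lambda>_. 0}" by (auto simp: vecs_def)
  then show ?case by simp
next
  case (Suc n)
  have fin: "finite (vecs n \<times> (UNIV :: bit set))" using Suc by (simp add: UNIV_bit)
  have "card (vecs (Suc n)) = card (vecs n \<times> (UNIV :: bit set))"
    unfolding vecs_Suc by (rule card_image[OF inj_vecs_Suc])
  also have "\<dots> = 2 ^ n * 2" using Suc by (simp add: card_cartesian_product UNIV_bit)
  finally show ?case using fin vecs_Suc by simp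
qed

lemma sum_indicator:
  assumes "S \<subseteq> {..<(n::nat)}"
  shows "(\<Sum>j<n. H i j * (if j \<in> S then 1 else 0)) = (\<Sum>j\<in>S. (H i j :: bit))"
proof -
  have "(\<Sum>j<n. H i j * (if j \<in> S then 1 else 0)) = (\<Sum>j\<in>S. H i j * (if j \<in> S then 1 else 0))"
    by (rule sum.mono_neutral_right) (use assms in auto)
  also have "\<dots> = (\<Sum>j\<in>S. H i j)" by (rule sum.cong) auto
  finally show ?thesis .
qed

lemma kernel_card:
  assumes surj: "\<forall>s\<in>vecs r. \<exists>S\<subseteq>{..<n}. s = col_sum r H S"
  shows "card (lin_code r n H) * 2 ^ r = 2 ^ n"
proof -
  define f where "f x = (\<lambda>i. if i < r then (\<Sum>j<n. H i j * x j) else 0)" for x :: "nat \<Rightarrow> bit"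
  define K where "K = lin_code r n H"
  define fib where "fib s = {x \<in> vecs n. f x = s}" for s
  have fvec: "f x \<in> vecs r" for x by (simp add: f_def vecs_def)
  have Kf: "K = fib (\<lambda>_. 0)"
    by (auto simp: K_def fib_def lin_code_def f_def fun_eq_iff)
  have finn: "finite (vecs n)" and cardn: "card (vecs n) = 2 ^ n" using card_vecs by auto
  have finr: "finite (vecs r)" and cardr: "card (vecs r) = 2 ^ r" using card_vecs by auto
  have fib_card: "card (fib s) = card K" if s: "s \<in> vecs r" for s
  proof -
    obtain S where S: "S \<subseteq> {..<n}" "s = col_sum r H S" using surj s by blast
    define x0 where "x0 j = (if j \<in> S then 1 else (0::bit))" for j
    have x0v: "x0 \<in> vecs n" using S by (auto simp: x0_def vecs_def)
    have fx0: "f x0 = s"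
    proof
      fix i show "f x0 i = s i"
      proof (cases "i < r")
        case True
        have "f x0 i = (\<Sum>j<n. H i j * (if j \<in> S then 1 else 0))"
          by (simp only: f_def x0_def if_P[OF True])
        also have "\<dots> = (\<Sum>j\<in>S. H i j)" by (rule sum_indicator[OF S(1)])
        also have "\<dots> = s i" by (simp only: S(2) col_sum_def if_P[OF True])
        finally show ?thesis .
      next
        case False
        then show ?thesis using s by (simp add: f_def vecs_def)
      qed
    qed
    define g where "g y = (\<lambda>j. y j + x0 j)" for y :: "nat \<Rightarrow> bit"
    have lin: "f (g y) = (\<lambda>i. f y i + f x0 i)" for y
      by (auto simp: f_def g_def fun_eq_iff distrib_left sum.distrib simp del: add_bit_eq_xor)
    have bij: "bij_betw g (fib (\<lambda>_. 0)) (fib s)"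
    proof (rule bij_betw_imageI)
      show "inj_on g (fib (\<lambda>_. 0))"
        by (rule inj_onI) (auto simp: g_def fun_eq_iff simp del: add_bit_eq_xor)
      show "g ` fib (\<lambda>_. 0) = fib s"
      proof
        show "g ` fib (\<lambda>_. 0) \<subseteq> fib s"
        proof
          fix z assume "z \<in> g ` fib (\<lambda>_. 0)"
          then obtain y where y: "y \<in> fib (\<lambda>_. 0)" "z = g y" by blast
          have "g y \<in> vecs n" using y x0v by (simp add: fib_def g_def vecs_def)
          moreover have "f (g y) = s"
            unfolding lin using y fx0 by (simp add: fib_def del: add_bit_eq_xor)
          ultimately show "z \<in> fib s" using y by (simp add: fib_def)
        qed
        show "fib s \<subseteq> g ` fib (\<lambda>_. 0)"
        proof
          fix x assume x: "x \<in> fib s"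
          define y where "y j = x j + x0 j" for j
          have "g y = x" by (auto simp: g_def y_def fun_eq_iff)
          moreover have "y \<in> fib (\<lambda>_. 0)"
          proof -
            have "f x = s" "x \<in> vecs n" using x by (auto simp: fib_def)
            moreover have "f y = (\<lambda>i. f x i + f x0 i)"
              by (auto simp: f_def y_def fun_eq_iff distrib_left sum.distrib simp del: add_bit_eq_xor)
            ultimately show ?thesis using x0v fx0 by (auto simp: fib_def y_def vecs_def fun_eq_iff)
          qed
          ultimately show "x \<in> g ` fib (\<lambda>_. 0)" by blast
        qed
      qed
    qed
    then show ?thesis using Kf bij_betw_same_card by metis
  qed
  have union: "vecs n = (\<Union>s\<in>vecs r. fib s)"
    using fvec by (auto simp: fib_def)
  have "card (vecs n) = (\<Sum>s\<in>vecs r. card (fib s))"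
    unfolding union
    by (rule card_UN_disjoint[OF finr]) (auto simp: fib_def intro: finite_subset[OF _ finn])
  also have "\<dots> = (\<Sum>s\<in>vecs r. card K)" by (rule sum.cong) (simp_all add: fib_card)
  also have "\<dots> = 2 ^ r * card K" using cardr by simp
  finally show ?thesis using cardn K_def by simp
qed

lemma small_sets:
  assumes "S \<subseteq> {..<(690::nat)}" "card S \<le> 3"
  shows "S \<in> (\<lambda>(a, b, c). {a, b, c} \<inter> {..<690}) ` ({..690} \<times> {..690} \<times> {..690})"
proof -
  have fin: "finite S" using assms(1) finite_subset by blast
  have "card S = 0 \<or> card S = 1 \<or> card S = 2 \<or> card S = 3" using assms(2) by linarith
  then show ?thesis
  proof (elim disjE)
    assume "card S = 0"
    then have "S = {}" using fin by simp
    then have "S = (\<lambda>(a, b, c). {a, b, c} \<inter> {..<690}) (690, 690, 690)" by auto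
    then show ?thesis by (intro image_eqI) auto
  next
    assume "card S = 1"
    then obtain x where x: "S = {x}" by (auto simp: card_1_singleton_iff)
    then have "S = (\<lambda>(a, b, c). {a, b, c} \<inter> {..<690}) (x, x, x)" using assms(1) by auto
    then show ?thesis using x assms(1) by (intro image_eqI) auto
  next
    assume "card S = 2"
    then obtain x y where x: "S = {x, y}" by (auto simp: card_2_iff)
    then have "S = (\<lambda>(a, b, c). {a, b, c} \<inter> {..<690}) (x, y, y)" using assms(1) by auto
    then show ?thesis using x assms(1) by (intro image_eqI) auto
  next
    assume "card S = 3"
    then obtain x y z where x: "S = {x, y, z}" by (auto simp: card_3_iff)
    then have "S = (\<lambda>(a, b, c). {a, b, c} \<inter> {..<690}) (x, y, z)" using assms(1) by auto
    then show ?thesis using x assms(1) by (intro image_eqI) auto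
  qed
qed

lemma not_covers3: "\<not> covers 31 690 H 3"
proof
  assume cov: "covers 31 690 H 3"
  let ?Q = "{S. S \<subseteq> {..<(690::nat)} \<and> card S \<le> 3}"
  let ?A = "{..(690::nat)} \<times> {..(690::nat)} \<times> {..(690::nat)}"
  let ?g = "\<lambda>(a, b, c). {a, b, c} \<inter> {..<(690::nat)}"
  have "vecs 31 \<subseteq> col_sum 31 H ` ?Q" using cov unfolding covers_def by blast
  moreover have "?Q \<subseteq> ?g ` ?A" using small_sets by blast
  ultimately have sub: "vecs 31 \<subseteq> col_sum 31 H ` (?g ` ?A)" by blast
  have "card (vecs 31) \<le> card (col_sum 31 H ` (?g ` ?A))"
    by (rule card_mono[OF _ sub]) simp
  also have "\<dots> \<le> card (?g ` ?A)" by (rule card_image_le) simp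
  also have "\<dots> \<le> card ?A" by (rule card_image_le) simp
  also have "\<dots> = 691 ^ 3" by (simp add: card_cartesian_product power3_eq_cube)
  finally have "(2::nat) ^ 31 \<le> 691 ^ 3" using card_vecs by simp
  then show False by simp
qed


lemma hl_len: "length hl = 22" by (simp add: hl_def)
lemma hl_dist: "distinct hl" by (simp add: hl_def)
lemma hl_rng: "\<forall>x\<in>set hl. 0 < x \<and> x < 2048" by (simp add: hl_def)

lemma hv_rng: "j < 22 \<Longrightarrow> 0 < hv j \<and> hv j < 2048"
  using hl_rng nth_mem[of j hl] hl_len by (simp add: hv_def)

lemma hv_inj: "j < 22 \<Longrightarrow> j' < 22 \<Longrightarrow> hv j = hv j' \<Longrightarrow> j = j'"
  using nth_eq_iff_index_eq[OF hl_dist] hl_len by (simp add: hv_def)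

lemma exists_bit: "(n::nat) \<noteq> 0 \<Longrightarrow> \<exists>i. bit n i"
  using bit_eq_iff[of n 0] by auto

lemma div32: "(c::nat) < 690 \<Longrightarrow> c div 32 < 22" by simp

lemma col_nz: assumes "c < 690" shows "\<exists>i<31. Hm i c \<noteq> 0"
proof -
  have r: "0 < hv (c div 32)" "hv (c div 32) < 2 ^ 11" using hv_rng[OF div32[OF assms]] by auto
  obtain i where i: "bit (hv (c div 32)) i" using exists_bit r(1) by blast
  have "i < 11" using bits_below[OF r(2) i] .
  then have "Hm i c \<noteq> 0" using i by (simp add: Hm_def)
  then show ?thesis using \<open>i < 11\<close> by (intro exI[of _ i]) simp
qed

lemma col_dist: assumes "c < 690" "c' < 690" "c \<noteq> c'" shows "\<exists>i<31. Hm i c \<noteq> Hm i c'"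
proof (cases "c div 32 = c' div 32")
  case False
  have ne: "hv (c div 32) \<noteq> hv (c' div 32)" using hv_inj[OF div32[OF assms(1)] div32[OF assms(2)]] False by blast
  obtain i where i: "bit (hv (c div 32)) i \<noteq> bit (hv (c' div 32)) i"
    using ne bit_eq_iff by blast
  have r: "hv (c div 32) < 2 ^ 11" "hv (c' div 32) < 2 ^ 11"
    using hv_rng[OF div32[OF assms(1)]] hv_rng[OF div32[OF assms(2)]] by auto
  have "i < 11" using i bits_below[OF r(1)] bits_below[OF r(2)] by blast
  then have "Hm i c \<noteq> Hm i c'" using i by (simp add: Hm_def)
  then show ?thesis using \<open>i < 11\<close> by (intro exI[of _ i]) simp
next
  case True
  have mne: "c mod 32 \<noteq> c' mod 32" using True assms(3) by (metis div_mod_decomp)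
  have "pn (c mod 32) \<noteq> pn (c' mod 32)" using mne pn_inj[of "c mod 32" "c' mod 32"] by auto
  then obtain bb where bb: "coeff (pn (c mod 32)) bb \<noteq> coeff (pn (c' mod 32)) bb"
    using poly_eqI by blast
  have bb5: "bb < 5" using bb by (auto simp: coeff_pn split: if_splits)
  have pm: "pn m mod P = pn m" for m by (rule mod_poly_less) (simp add: degree_P degree_pn)
  have "Hm (11 + bb) c = coeff (pn (c mod 32)) bb" "Hm (11 + bb) c' = coeff (pn (c' mod 32)) bb"
    using bb5 by (simp_all add: Hm_def pm)
  then have "Hm (11 + bb) c \<noteq> Hm (11 + bb) c'" using bb by simp
  then show ?thesis using bb5 by (intro exI[of _ "11 + bb"]) simp
qed

lemma code_diff_sum:
  assumes x: "x \<in> lin_code r n H" and y: "y \<in> lin_code r n H" and i: "i < r"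
  shows "(\<Sum>j\<in>{j. j < n \<and> x j \<noteq> y j}. H i j) = 0"
proof -
  have sx: "(\<Sum>j<n. H i j * x j) = 0" and sy: "(\<Sum>j<n. H i j * y j) = 0"
    using x y i by (auto simp: lin_code_def)
  have xy: "x j + y j = (if j \<in> {j. j < n \<and> x j \<noteq> y j} then 1 else 0)" if "j < n" for j
    using that bit_cases'[of "x j"] bit_cases'[of "y j"] by auto
  have "(\<Sum>j<n. H i j * (x j + y j)) = 0"
    using sx sy by (simp add: distrib_left sum.distrib del: add_bit_eq_xor)
  moreover have "(\<Sum>j<n. H i j * (x j + y j)) = (\<Sum>j<n. H i j * (if j \<in> {j. j < n \<and> x j \<noteq> y j} then 1 else 0))"
    by (rule sum.cong) (simp_all only: xy lessThan_iff)
  moreover have "\<dots> = (\<Sum>j\<in>{j. j < n \<and> x j \<noteq> y j}. H i j)"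
    by (rule sum_indicator) auto
  ultimately show ?thesis by simp
qed

definition CC :: "(nat \<Rightarrow> bit) set" where "CC = lin_code 31 690 Hm"

lemma dist_ge3:
  assumes x: "x \<in> CC" and y: "y \<in> CC" and ne: "x \<noteq> y"
  shows "3 \<le> hamming 690 x y"
proof -
  define Dd where "Dd = {j. j < 690 \<and> x j \<noteq> y j}"
  have fin: "finite Dd" by (simp add: Dd_def)
  have sub: "Dd \<subseteq> {..<690}" by (auto simp: Dd_def)
  have z: "\<And>i. i < 31 \<Longrightarrow> (\<Sum>j\<in>Dd. Hm i j) = 0"
    using code_diff_sum x y unfolding CC_def Dd_def by blast
  have "Dd \<noteq> {}"
  proof
    assume "Dd = {}"
    have "x = y"
    proof
      fix j show "x j = y j"
      proof (cases "j < 690")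
        case True then show ?thesis using \<open>Dd = {}\<close> by (auto simp: Dd_def)
      next
        case False then show ?thesis using x y by (auto simp: CC_def lin_code_def vecs_def)
      qed
    qed
    with ne show False ..
  qed
  then have c0: "card Dd \<noteq> 0" using fin by simp
  have c1: "card Dd \<noteq> 1"
  proof
    assume "card Dd = 1"
    then obtain a where a: "Dd = {a}" by (auto simp: card_1_singleton_iff)
    then have "a < 690" using sub by auto
    from col_nz[OF this] obtain i where "i < 31" "Hm i a \<noteq> 0" by blast
    with z[of i] a show False by simp
  qed
  have c2: "card Dd \<noteq> 2"
  proof
    assume "card Dd = 2"
    then obtain a b where ab: "Dd = {a, b}" "a \<noteq> b" by (auto simp: card_2_iff)
    then have "a < 690" "b < 690" using sub by auto
    from col_dist[OF this ab(2)] obtain i where i: "i < 31" "Hm i a \<noteq> Hm i b" by blast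
    have "Hm i a + Hm i b = 0" using z[OF i(1)] ab by simp
    then have "Hm i a = Hm i b"
      using bit_cases'[of "Hm i a"] bit_cases'[of "Hm i b"] by auto
    with i show False by simp
  qed
  have "3 \<le> card Dd" using c0 c1 c2 by linarith
  then show ?thesis by (simp add: hamming_def Dd_def)
qed

lemma hv21: "hv 21 = xor (hv 0) (hv 1)" by (simp add: hv_def hl_def)

definition x3 :: "nat \<Rightarrow> bit" where "x3 j = (if j \<in> {0, 32, 672} then 1 else 0)"

lemma x3_code: "x3 \<in> CC"
proof -
  have "x3 \<in> vecs 690" by (simp add: x3_def vecs_def)
  moreover have "(\<Sum>j<690. Hm i j * x3 j) = 0" if i: "i < 31" for i
  proof -
    have "(\<Sum>j<690. Hm i j * x3 j) = (\<Sum>j\<in>{0, 32, 672}. Hm i j)"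
      unfolding x3_def by (rule sum_indicator) auto
    also have "\<dots> = Hm i 0 + Hm i 32 + Hm i 672" by (simp add: ac_simps del: add_bit_eq_xor)
    also have "\<dots> = 0"
    proof (cases "i < 11")
      case True
      then show ?thesis by (simp add: Hm_def hv21 bit_xor_iff)
    next
      case False
      then show ?thesis using i by (simp add: Hm_def pn_0)
    qed
    finally show ?thesis .
  qed
  ultimately show ?thesis by (simp add: CC_def lin_code_def)
qed

lemma zero_code: "(\<lambda>_. 0) \<in> CC"
  by (simp add: CC_def lin_code_def vecs_def)

lemma ham3: "hamming 690 x3 (\<lambda>_. 0) = 3"
proof -
  have "{j. j < 690 \<and> x3 j \<noteq> 0} = {0, 32, 672}" by (auto simp: x3_def)
  then show ?thesis by (simp add: hamming_def)
qed

lemma min_dist3: "min_dist 690 CC = 3"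
proof -
  let ?A = "{hamming 690 x y | x y. x \<in> CC \<and> y \<in> CC \<and> x \<noteq> y}"
  have finC: "finite CC"
    by (rule finite_subset[of _ "vecs 690"]) (auto simp: CC_def lin_code_def card_vecs)
  have sub: "?A \<subseteq> (\<lambda>(x, y). hamming 690 x y) ` (CC \<times> CC)" by auto
  have "finite ((\<lambda>(x, y). hamming 690 x y) ` (CC \<times> CC))" using finC by simp
  then have fin: "finite ?A" using sub by (rule finite_subset[rotated])
  have x3ne: "x3 \<noteq> (\<lambda>_. 0)" by (auto simp: x3_def fun_eq_iff)
  have "3 \<in> ?A" using x3_code zero_code ham3 x3ne by force
  moreover have "\<forall>a\<in>?A. 3 \<le> a" using dist_ge3 by blast
  ultimately show ?thesis unfolding min_dist_def by (intro Min_eqI fin) auto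
qed

lemma cov4: "cov_radius 31 690 Hm = 4"
  unfolding cov_radius_def
proof (rule Least_equality)
  show "covers 31 690 Hm 4" by (rule covers_Hm)
  fix R assume R: "covers 31 690 Hm R"
  show "4 \<le> R"
  proof (rule ccontr)
    assume "\<not> 4 \<le> R"
    then have "R \<le> 3" by simp
    then have "covers 31 690 Hm 3" using R unfolding covers_def by (meson order.trans)
    with not_covers3 show False by blast
  qed
qed

lemma codim: "codim_code 690 31 Hm"
proof -
  have surj: "\<forall>s\<in>vecs 31. \<exists>S\<subseteq>{..<690}. s = col_sum 31 Hm S"
    using covers_Hm unfolding covers_def by blast
  have "card (lin_code 31 690 Hm) * 2 ^ 31 = 2 ^ 690" by (rule kernel_card[OF surj])
  then have "card (lin_code 31 690 Hm) = 2 ^ 659" by simp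
  then show ?thesis by (simp add: codim_code_def)
qed

theorem theorem9p2:
  shows "(\<exists>H. is_code 690 31 3 4 H) \<and> ell2 31 4 \<le> 690"
proof
  have code: "is_code 690 31 3 4 Hm"
    using codim min_dist3 cov4 by (simp add: is_code_def CC_def)
  then show "\<exists>H. is_code 690 31 3 4 H" by blast
  show "ell2 31 4 \<le> 690"
    unfolding ell2_def using codim cov4 by (intro Least_le) blast
qed

end
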